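(* The set of all $Z$-reguli of $\mathcal G$ is a single orbit under the natural action of the group $\operatorname{Aut}_K(V)$ of $K$-linear automorphisms of $V$. Moreover, given any three mutually distant elements of $\mathcal G$, there is a unique $Z$-regulus containing them.
   Context: $K$ is a (not necessarily commutative) field with centre $Z$, and $V$ is a left vector space over $K$ of arbitrary (possibly infinite) dimension with $\dim V>2$. $\mathcal G:=\{X\le V\mid X\cong V/X\}$, assumed nonempty. Points are $1$-dimensional and lines $2$-dimensional subspaces; two subspaces meet if they have a common point. $X,Y\in\mathcal G$ are distant if $V=X\oplus Y$. A $Z$-regulus is a subset $\mathcal R\subseteq\mathcal G$ such that (R1) its elements are mutually distant and $|\mathcal R|\ge3$; (R2) if a line meets three mutually distinct elements of $\mathcal R$ then it meets all elements of $\mathcal R$; (R3) $\mathcal R$ is not properly contained in any subset of $\mathcal G$ satisfying (R1) and (R2). *)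

theory Defs
  imports Main
begin

text \<open>A left vector space over a (not necessarily commutative) field K,
  given by the carrier type 'v (V = UNIV) and a scalar multiplication sm.\<close>

definition left_vs :: "('k::division_ring \<Rightarrow> 'v::ab_group_add \<Rightarrow> 'v) \<Rightarrow> bool" where
  "left_vs sm \<longleftrightarrow>
     (\<forall>a x y. sm a (x + y) = sm a x + sm a y) \<and>
     (\<forall>a b x. sm (a + b) x = sm a x + sm b x) \<and>
     (\<forall>a b x. sm (a * b) x = sm a (sm b x)) \<and>
     (\<forall>x. sm 1 x = x)"

definition subspace :: "('k::division_ring \<Rightarrow> 'v::ab_group_add \<Rightarrow> 'v) \<Rightarrow> 'v set \<Rightarrow> bool" where
  "subspace sm X \<longleftrightarrow> 0 \<in> X \<and> (\<forall>x\<in>X. \<forall>y\<in>X. x + y \<in> X) \<and> (\<forall>a. \<forall>x\<in>X. sm a x \<in> X)"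

definition klinear :: "('k::division_ring \<Rightarrow> 'v::ab_group_add \<Rightarrow> 'v) \<Rightarrow> ('v \<Rightarrow> 'v) \<Rightarrow> bool" where
  "klinear sm f \<longleftrightarrow> (\<forall>x y. f (x + y) = f x + f y) \<and> (\<forall>a x. f (sm a x) = sm a (f x))"

definition Aut :: "('k::division_ring \<Rightarrow> 'v::ab_group_add \<Rightarrow> 'v) \<Rightarrow> ('v \<Rightarrow> 'v) set" where
  "Aut sm = {f. klinear sm f \<and> bij f}"

definition dim_gt_2 :: "('k::division_ring \<Rightarrow> 'v::ab_group_add \<Rightarrow> 'v) \<Rightarrow> bool" where
  "dim_gt_2 sm \<longleftrightarrow> (\<exists>u v w. \<forall>a b c. sm a u + sm b v + sm c w = 0 \<longrightarrow> a = 0 \<and> b = 0 \<and> c = 0)"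

text \<open>The quotient V/X: its elements are the cosets v + X, with addition and
  scalar multiplication defined via representatives.\<close>
definition coset :: "'v::ab_group_add set \<Rightarrow> 'v \<Rightarrow> 'v set" where
  "coset X v = (\<lambda>x. v + x) ` X"

definition quotient_space :: "'v::ab_group_add set \<Rightarrow> 'v set set" where
  "quotient_space X = range (coset X)"

definition iso_to_quotient :: "('k::division_ring \<Rightarrow> 'v::ab_group_add \<Rightarrow> 'v) \<Rightarrow> 'v set \<Rightarrow> bool" where
  "iso_to_quotient sm X \<longleftrightarrow>
     (\<exists>f. bij_betw f X (quotient_space X) \<and>
          (\<forall>a\<in>X. \<forall>b\<in>X. \<forall>u\<in>f a. \<forall>w\<in>f b. f (a + b) = coset X (u + w)) \<and>
          (\<forall>c. \<forall>a\<in>X. \<forall>u\<in>f a. f (sm c a) = coset X (sm c u)))"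

definition Gr :: "('k::division_ring \<Rightarrow> 'v::ab_group_add \<Rightarrow> 'v) \<Rightarrow> 'v set set" where
  "Gr sm = {X. subspace sm X \<and> iso_to_quotient sm X}"

definition is_point :: "('k::division_ring \<Rightarrow> 'v::ab_group_add \<Rightarrow> 'v) \<Rightarrow> 'v set \<Rightarrow> bool" where
  "is_point sm P \<longleftrightarrow> (\<exists>v. v \<noteq> 0 \<and> P = range (\<lambda>c. sm c v))"

definition is_line :: "('k::division_ring \<Rightarrow> 'v::ab_group_add \<Rightarrow> 'v) \<Rightarrow> 'v set \<Rightarrow> bool" where
  "is_line sm L \<longleftrightarrow> (\<exists>u v. (\<forall>a b. sm a u + sm b v = 0 \<longrightarrow> a = 0 \<and> b = 0) \<and>
                         L = {sm a u + sm b v | a b. True})"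

definition meets :: "('k::division_ring \<Rightarrow> 'v::ab_group_add \<Rightarrow> 'v) \<Rightarrow> 'v set \<Rightarrow> 'v set \<Rightarrow> bool" where
  "meets sm X Y \<longleftrightarrow> (\<exists>P. is_point sm P \<and> P \<subseteq> X \<and> P \<subseteq> Y)"

definition distant :: "'v::ab_group_add set \<Rightarrow> 'v set \<Rightarrow> bool" where
  "distant X Y \<longleftrightarrow> X \<inter> Y = {0} \<and> {x + y | x y. x \<in> X \<and> y \<in> Y} = UNIV"

definition R1 :: "('k::division_ring \<Rightarrow> 'v::ab_group_add \<Rightarrow> 'v) \<Rightarrow> 'v set set \<Rightarrow> bool" where
  "R1 sm R \<longleftrightarrow> (\<forall>X\<in>R. \<forall>Y\<in>R. X \<noteq> Y \<longrightarrow> distant X Y) \<and>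
               (\<exists>A B C. A \<in> R \<and> B \<in> R \<and> C \<in> R \<and> A \<noteq> B \<and> A \<noteq> C \<and> B \<noteq> C)"

definition R2 :: "('k::division_ring \<Rightarrow> 'v::ab_group_add \<Rightarrow> 'v) \<Rightarrow> 'v set set \<Rightarrow> bool" where
  "R2 sm R \<longleftrightarrow> (\<forall>L. is_line sm L \<longrightarrow>
      (\<forall>A\<in>R. \<forall>B\<in>R. \<forall>C\<in>R. A \<noteq> B \<and> A \<noteq> C \<and> B \<noteq> C \<and>
          meets sm L A \<and> meets sm L B \<and> meets sm L C \<longrightarrow> (\<forall>X\<in>R. meets sm L X)))"

definition Z_regulus :: "('k::division_ring \<Rightarrow> 'v::ab_group_add \<Rightarrow> 'v) \<Rightarrow> 'v set set \<Rightarrow> bool" where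
  "Z_regulus sm R \<longleftrightarrow> R \<subseteq> Gr sm \<and> R1 sm R \<and> R2 sm R \<and>
     \<not> (\<exists>S. R \<subset> S \<and> S \<subseteq> Gr sm \<and> R1 sm S \<and> R2 sm S)"

end

theory Submission
  imports Defs
begin

unbundle cardinal_syntax


locale LV =
  fixes sm :: "'k::division_ring \<Rightarrow> 'v::ab_group_add \<Rightarrow> 'v" (infixr "*s" 75)
  assumes lvs: "left_vs sm"
begin

lemma sm_add_right: "a *s (x + y) = a *s x + a *s y"
  using lvs unfolding left_vs_def by blast
lemma sm_add_left: "(a + b) *s x = a *s x + b *s x"
  using lvs unfolding left_vs_def by blast
lemma sm_assoc: "(a * b) *s x = a *s (b *s x)"
  using lvs unfolding left_vs_def by blast
lemma sm_one[simp]: "1 *s x = x"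
  using lvs unfolding left_vs_def by blast

lemma sm_zero_left[simp]: "0 *s x = 0"
proof -
  have "0 *s x = (0 + 0) *s x" by simp
  also have "\<dots> = 0 *s x + 0 *s x" by (rule sm_add_left)
  finally show ?thesis by simp
qed

lemma sm_zero_right[simp]: "a *s 0 = 0"
proof -
  have "a *s 0 = a *s (0 + 0)" by simp
  also have "\<dots> = a *s 0 + a *s 0" by (rule sm_add_right)
  finally show ?thesis by simp
qed

lemma sm_minus_left: "(- a) *s x = - (a *s x)"
proof -
  have "(- a) *s x + a *s x = 0" using sm_add_left[of "-a" a x] by simp
  thus ?thesis by (simp add: eq_neg_iff_add_eq_0)
qed

lemma sm_minus_right: "a *s (- x) = - (a *s x)"
proof -
  have "a *s (- x) + a *s x = 0" using sm_add_right[of a "-x" x] by simp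
  thus ?thesis by (simp add: eq_neg_iff_add_eq_0)
qed

lemma sm_diff_left: "(a - b) *s x = a *s x - b *s x"
  using sm_add_left[of a "-b" x] sm_minus_left by simp

lemma sm_diff_right: "a *s (x - y) = a *s x - a *s y"
  using sm_add_right[of a x "-y"] sm_minus_right by simp

lemma sm_inv: "a \<noteq> 0 \<Longrightarrow> inverse a *s (a *s x) = x"
  by (metis sm_assoc left_inverse sm_one)

lemma sm_inv2: "a \<noteq> 0 \<Longrightarrow> a *s (inverse a *s x) = x"
  by (metis sm_assoc right_inverse sm_one)

lemma sm_eq_0[simp]: "a *s x = 0 \<longleftrightarrow> a = 0 \<or> x = 0"
  by (metis sm_inv sm_zero_left sm_zero_right)

lemma sm_cancel: "a \<noteq> 0 \<Longrightarrow> a *s x = a *s y \<longleftrightarrow> x = y"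
  by (metis sm_inv)

lemma sm_cancel_left: "x \<noteq> 0 \<Longrightarrow> a *s x = b *s x \<longleftrightarrow> a = b"
  by (metis sm_diff_left sm_eq_0 eq_iff_diff_eq_0)

lemma sm_neg_one[simp]: "(-1) *s x = - x"
  by (simp add: sm_minus_left)

abbreviation "subsp X \<equiv> subspace sm X"

lemma subsp_0: "subsp X \<Longrightarrow> 0 \<in> X"
  unfolding subspace_def by blast
lemma subsp_add: "subsp X \<Longrightarrow> x \<in> X \<Longrightarrow> y \<in> X \<Longrightarrow> x + y \<in> X"
  unfolding subspace_def by blast
lemma subsp_sm: "subsp X \<Longrightarrow> x \<in> X \<Longrightarrow> a *s x \<in> X"
  unfolding subspace_def by blast
lemma subsp_neg: "subsp X \<Longrightarrow> x \<in> X \<Longrightarrow> - x \<in> X"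
  by (metis sm_neg_one subsp_sm)
lemma subsp_diff: "subsp X \<Longrightarrow> x \<in> X \<Longrightarrow> y \<in> X \<Longrightarrow> x - y \<in> X"
  by (metis diff_conv_add_uminus subsp_add subsp_neg)
lemma subsp_add_iff: "subsp X \<Longrightarrow> x \<in> X \<Longrightarrow> x + y \<in> X \<longleftrightarrow> y \<in> X"
  by (metis add_diff_cancel_left' subsp_add subsp_diff)
lemma subsp_UNIV: "subsp UNIV"
  unfolding subspace_def by blast
lemma subsp_Int: "subsp X \<Longrightarrow> subsp Y \<Longrightarrow> subsp (X \<inter> Y)"
  unfolding subspace_def by blast
lemma subsp_I:
  assumes "0 \<in> X" "\<And>x y. x \<in> X \<Longrightarrow> y \<in> X \<Longrightarrow> x + y \<in> X" "\<And>a x. x \<in> X \<Longrightarrow> a *s x \<in> X"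
  shows "subsp X"
  using assms unfolding subspace_def by blast

definition span :: "'v set \<Rightarrow> 'v set" where
  "span S = \<Inter>{U. subsp U \<and> S \<subseteq> U}"

lemma subsp_span: "subsp (span S)"
  unfolding span_def subspace_def by blast

lemma span_superset: "S \<subseteq> span S"
  unfolding span_def by blast

lemma span_minimal: "subsp U \<Longrightarrow> S \<subseteq> U \<Longrightarrow> span S \<subseteq> U"
  unfolding span_def by blast

lemma span_mono: "S \<subseteq> T \<Longrightarrow> span S \<subseteq> span T"
  by (meson span_minimal span_superset subsp_span order_trans)

lemma span_0: "0 \<in> span S"
  by (rule subsp_0[OF subsp_span])

lemma span_add: "x \<in> span S \<Longrightarrow> y \<in> span S \<Longrightarrow> x + y \<in> span S"
  by (rule subsp_add[OF subsp_span])
lemma span_sm: "x \<in> span S \<Longrightarrow> a *s x \<in> span S"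
  by (rule subsp_sm[OF subsp_span])
lemma span_diff: "x \<in> span S \<Longrightarrow> y \<in> span S \<Longrightarrow> x - y \<in> span S"
  by (rule subsp_diff[OF subsp_span])
lemma span_neg: "x \<in> span S \<Longrightarrow> - x \<in> span S"
  by (rule subsp_neg[OF subsp_span])
lemma span_base: "x \<in> S \<Longrightarrow> x \<in> span S"
  using span_superset by blast

lemma span_of_subsp: "subsp U \<Longrightarrow> span U = U"
  by (simp add: span_minimal span_superset subset_antisym)

lemma span_span[simp]: "span (span S) = span S"
  by (simp add: span_of_subsp subsp_span)

lemma span_empty: "span {} = {0}"
proof -
  have "subsp {0}" by (rule subsp_I) auto
  hence "span {} \<subseteq> {0}" by (rule span_minimal) auto
  thus ?thesis using span_0 by blast
qed

lemma span_insert: "span (insert v T) = {a *s v + t | a t. t \<in> span T}"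
proof
  let ?R = "{a *s v + t | a t. t \<in> span T}"
  have "subsp ?R"
  proof (rule subsp_I)
    show "0 \<in> ?R" using span_0 by (metis (mono_tags, lifting) add_0 mem_Collect_eq sm_zero_left)
    fix x y assume "x \<in> ?R" "y \<in> ?R"
    then obtain a t b u where "x = a *s v + t" "t \<in> span T" "y = b *s v + u" "u \<in> span T" by blast
    hence "x + y = (a + b) *s v + (t + u)" "t + u \<in> span T"
      by (simp_all add: sm_add_left span_add algebra_simps)
    thus "x + y \<in> ?R" by blast
  next
    fix c x assume "x \<in> ?R"
    then obtain a t where "x = a *s v + t" "t \<in> span T" by blast
    hence "c *s x = (c * a) *s v + c *s t" "c *s t \<in> span T"
      by (simp_all add: sm_add_right sm_assoc span_sm)
    thus "c *s x \<in> ?R" by blast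
  qed
  moreover have "insert v T \<subseteq> ?R"
  proof
    fix x assume "x \<in> insert v T"
    then consider "x = v" | "x \<in> T" by blast
    thus "x \<in> ?R"
    proof cases
      case 1 thus ?thesis using span_0 by (metis (mono_tags, lifting) add.right_neutral mem_Collect_eq sm_one)
    next
      case 2 hence "x = 0 *s v + x" "x \<in> span T" by (auto simp: span_base)
      thus ?thesis by blast
    qed
  qed
  ultimately show "span (insert v T) \<subseteq> ?R" by (rule span_minimal)
next
  show "{a *s v + t | a t. t \<in> span T} \<subseteq> span (insert v T)"
  proof
    fix x assume "x \<in> {a *s v + t | a t. t \<in> span T}"
    then obtain a t where "x = a *s v + t" "t \<in> span T" by blast
    moreover have "t \<in> span (insert v T)" using \<open>t \<in> span T\<close> span_mono[of T "insert v T"] by blast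
    moreover have "v \<in> span (insert v T)" by (simp add: span_base)
    ultimately show "x \<in> span (insert v T)" by (simp add: span_add span_sm)
  qed
qed

lemma span_singleton: "span {v} = range (\<lambda>a. a *s v)"
  using span_insert[of v "{}"] by (auto simp: span_empty)

lemma span_pair: "span {u, v} = {a *s u + b *s v | a b. True}"
  using span_insert[of u "{v}"] by (auto simp: span_singleton)

lemma span_insert_eq: "v \<in> span T \<Longrightarrow> span (insert v T) = span T"
  by (metis insert_subset span_mono span_superset span_minimal subsp_span subset_antisym subset_insertI)

lemma span_exchange:
  assumes "w \<in> span (insert v T)" "w \<notin> span T"
  shows "v \<in> span (insert w T)"
proof -
  obtain a t where w: "w = a *s v + t" "t \<in> span T" using assms(1) span_insert by blast
  have "a \<noteq> 0" using w assms(2) by auto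
  have "v = inverse a *s w + (- inverse a) *s t"
    using \<open>a \<noteq> 0\<close> by (simp add: w sm_add_right sm_inv sm_minus_left)
  thus ?thesis using w(2) span_insert[of w T]
    by (metis (mono_tags, lifting) mem_Collect_eq span_sm)
qed

lemma span_exchange_eq:
  assumes "w \<in> span (insert v T)" "w \<notin> span T"
  shows "span (insert w T) = span (insert v T)"
proof -
  have "v \<in> span (insert w T)" using span_exchange assms by blast
  hence "span (insert v (insert w T)) = span (insert w T)" by (rule span_insert_eq)
  moreover have "span (insert w (insert v T)) = span (insert v T)" using assms(1) by (rule span_insert_eq)
  ultimately show ?thesis by (simp add: insert_commute)
qed

lemma span_Un: "span (S \<union> T) = {x + y | x y. x \<in> span S \<and> y \<in> span T}"
proof
  let ?R = "{x + y | x y. x \<in> span S \<and> y \<in> span T}"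
  have "subsp ?R"
  proof (rule subsp_I)
    show "0 \<in> ?R" using span_0 by (metis (mono_tags, lifting) add_0 mem_Collect_eq)
    fix x y assume "x \<in> ?R" "y \<in> ?R"
    then obtain a t b u where "x = a + t" "a \<in> span S" "t \<in> span T" "y = b + u" "b \<in> span S" "u \<in> span T" by blast
    hence "x + y = (a + b) + (t + u)" "a + b \<in> span S" "t + u \<in> span T"
      by (simp_all add: span_add algebra_simps)
    thus "x + y \<in> ?R" by blast
  next
    fix c x assume "x \<in> ?R"
    then obtain a t where "x = a + t" "a \<in> span S" "t \<in> span T" by blast
    hence "c *s x = c *s a + c *s t" "c *s a \<in> span S" "c *s t \<in> span T"
      by (simp_all add: sm_add_right span_sm)
    thus "c *s x \<in> ?R" by blast
  qed
  moreover have "S \<union> T \<subseteq> ?R"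
  proof
    fix x assume "x \<in> S \<union> T"
    then consider "x \<in> S" | "x \<in> T" by blast
    thus "x \<in> ?R"
    proof cases
      case 1 hence "x = x + 0" "x \<in> span S" "0 \<in> span T" by (auto simp: span_base span_0)
      thus ?thesis by blast
    next
      case 2 hence "x = 0 + x" "0 \<in> span S" "x \<in> span T" by (auto simp: span_base span_0)
      thus ?thesis by blast
    qed
  qed
  ultimately show "span (S \<union> T) \<subseteq> ?R" by (rule span_minimal)
next
  show "{x + y | x y. x \<in> span S \<and> y \<in> span T} \<subseteq> span (S \<union> T)"
    using span_mono[of S "S \<union> T"] span_mono[of T "S \<union> T"] span_add by blast
qed

lemma span_finite:
  assumes "x \<in> span S"
  shows "\<exists>F. finite F \<and> F \<subseteq> S \<and> x \<in> span F"
proof -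
  let ?R = "\<Union>{span F | F. finite F \<and> F \<subseteq> S}"
  have "subsp ?R"
  proof (rule subsp_I)
    show "0 \<in> ?R" using span_0 by blast
    fix x y assume "x \<in> ?R" "y \<in> ?R"
    then obtain F G where "finite F" "F \<subseteq> S" "x \<in> span F" "finite G" "G \<subseteq> S" "y \<in> span G" by blast
    hence "x \<in> span (F \<union> G)" "y \<in> span (F \<union> G)" using span_mono by (blast, blast)
    hence "x + y \<in> span (F \<union> G)" by (rule span_add)
    thus "x + y \<in> ?R" using \<open>finite F\<close> \<open>finite G\<close> \<open>F \<subseteq> S\<close> \<open>G \<subseteq> S\<close> by blast
  next
    fix a x assume "x \<in> ?R"
    thus "a *s x \<in> ?R" using span_sm by blast
  qed
  moreover have "S \<subseteq> ?R"
  proof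
    fix x assume "x \<in> S"
    hence "x \<in> span {x}" "finite {x}" "{x} \<subseteq> S" by (auto simp: span_base)
    thus "x \<in> ?R" by blast
  qed
  ultimately have "span S \<subseteq> ?R" by (rule span_minimal)
  thus ?thesis using assms by blast
qed

definition indep :: "'v set \<Rightarrow> bool" where
  "indep S \<longleftrightarrow> (\<forall>v\<in>S. v \<notin> span (S - {v}))"

lemma indep_zero: "indep S \<Longrightarrow> 0 \<notin> S"
  unfolding indep_def using span_0 by blast

lemma indep_mono: "indep S \<Longrightarrow> T \<subseteq> S \<Longrightarrow> indep T"
  unfolding indep_def by (meson Diff_mono in_mono order_refl span_mono)

lemma indep_empty: "indep {}"
  unfolding indep_def by blast

lemma indep_insert:
  assumes "indep S" "v \<notin> span S"
  shows "indep (insert v S)"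
  unfolding indep_def
proof
  fix w assume w: "w \<in> insert v S"
  show "w \<notin> span (insert v S - {w})"
  proof (cases "w = v")
    case True
    thus ?thesis using assms(2) span_mono[of "insert v S - {w}" S] by blast
  next
    case False
    hence wS: "w \<in> S" using w by blast
    have vS: "v \<notin> S" using assms(2) span_superset by blast
    have eq: "insert v S - {w} = insert v (S - {w})" using False by blast
    have nw: "w \<notin> span (S - {w})" using assms(1) wS unfolding indep_def by blast
    show ?thesis
    proof
      assume "w \<in> span (insert v S - {w})"
      hence "w \<in> span (insert v (S - {w}))" using eq by simp
      hence "v \<in> span (insert w (S - {w}))" using span_exchange nw by blast
      moreover have "insert w (S - {w}) = S" using wS by blast
      ultimately show False using assms(2) by simp
    qed
  qed
qed

lemma indep_not_in_span_diff:
  "indep S \<Longrightarrow> v \<in> S \<Longrightarrow> T \<subseteq> S - {v} \<Longrightarrow> v \<notin> span T"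
  unfolding indep_def using span_mono by blast

lemma basis_exists:
  assumes U: "subsp U" and S: "indep S" "S \<subseteq> U"
  shows "\<exists>B. S \<subseteq> B \<and> B \<subseteq> U \<and> indep B \<and> span B = U"
proof -
  let ?A = "{B. S \<subseteq> B \<and> B \<subseteq> U \<and> indep B}"
  have "\<exists>M\<in>?A. \<forall>X\<in>?A. M \<subseteq> X \<longrightarrow> X = M"
  proof (rule subset_Zorn_nonempty)
    show "?A \<noteq> {}" using S by blast
    fix C assume C: "C \<noteq> {}" "subset.chain ?A C"
    have "indep (\<Union>C)"
      unfolding indep_def
    proof
      fix v assume v: "v \<in> \<Union>C"
      show "v \<notin> span (\<Union>C - {v})"
      proof
        assume "v \<in> span (\<Union>C - {v})"
        then obtain F where F: "finite F" "F \<subseteq> \<Union>C - {v}" "v \<in> span F"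
          using span_finite by blast
        have "finite (insert v F)" "insert v F \<subseteq> \<Union>C" using F v by auto
        then obtain M where "M \<in> C" "insert v F \<subseteq> M"
          using finite_subset_Union_chain[OF _ _ C] by blast
        hence "indep M" "v \<in> M" "F \<subseteq> M - {v}" using C F unfolding subset_chain_def by auto
        thus False using indep_not_in_span_diff F(3) by blast
      qed
    qed
    thus "\<Union>C \<in> ?A" using C unfolding subset_chain_def by blast
  qed
  then obtain B where B: "S \<subseteq> B" "B \<subseteq> U" "indep B" and max: "\<forall>X\<in>?A. B \<subseteq> X \<longrightarrow> X = B" by blast
  have "span B = U"
  proof (rule ccontr)
    assume "span B \<noteq> U"
    moreover have "span B \<subseteq> U" using B U span_minimal by blast
    ultimately obtain u where u: "u \<in> U" "u \<notin> span B" by blast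
    hence "insert u B \<in> ?A" using B indep_insert by blast
    hence "insert u B = B" using max by blast
    thus False using u span_superset by blast
  qed
  thus ?thesis using B by blast
qed

end



context LV begin

lemma steinitz:
  assumes "finite S"
  shows "indep T \<Longrightarrow> T \<subseteq> span S \<Longrightarrow> finite T \<and> card T \<le> card S"
  using assms
proof (induction S arbitrary: T rule: finite_induct)
  case empty
  then have "T \<subseteq> {0}" by (simp add: span_empty)
  with indep_zero[OF empty.prems(1)] have "T = {}" by blast
  thus ?case by simp
next
  case (insert s S)
  show ?case
  proof (cases "T \<subseteq> span S")
    case True
    with insert.IH insert.prems have "finite T \<and> card T \<le> card S" by blast
    thus ?thesis using insert.hyps by simp
  next
    case False
    then obtain t0 where t0: "t0 \<in> T" "t0 \<notin> span S" by blast
    have t0s: "t0 \<in> span (insert s S)" using insert.prems t0 by blast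
    have spT: "T \<subseteq> span (insert t0 S)" using span_exchange_eq[OF t0s t0(2)] insert.prems by simp
    define g where "g t = (SOME u. u \<in> span S \<and> (\<exists>d. t = d *s t0 + u))" for t
    have g: "g t \<in> span S \<and> (\<exists>d. t = d *s t0 + g t)" if "t \<in> T" for t
    proof -
      have "\<exists>u. u \<in> span S \<and> (\<exists>d. t = d *s t0 + u)" using spT that span_insert by blast
      thus ?thesis unfolding g_def by (rule someI_ex)
    qed
    let ?T' = "T - {t0}"
    have inj: "inj_on g ?T'"
    proof (rule inj_onI)
      fix t1 t2 assume a: "t1 \<in> ?T'" "t2 \<in> ?T'" "g t1 = g t2"
      obtain d1 where d1: "t1 = d1 *s t0 + g t1" using g a by blast
      obtain d2 where d2: "t2 = d2 *s t0 + g t2" using g a by blast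
      have eq: "t1 = (d1 - d2) *s t0 + 1 *s t2"
        using d1 d2 a(3) by (simp add: sm_diff_left) (metis add_diff_cancel_left' diff_add_cancel)
      show "t1 = t2"
      proof (rule ccontr)
        assume ne: "t1 \<noteq> t2"
        have "t1 \<in> span {t0, t2}" using eq span_pair by blast
        moreover have "{t0, t2} \<subseteq> T - {t1}" using a ne t0 by auto
        ultimately show False using indep_not_in_span_diff[OF insert.prems(1)] a span_mono
          by (meson DiffD1 in_mono indep_def insert.prems(1))
      qed
    qed
    have indep': "indep (g ` ?T')"
      unfolding indep_def
    proof
      fix w assume "w \<in> g ` ?T'"
      then obtain t where t: "t \<in> ?T'" "w = g t" by blast
      show "w \<notin> span (g ` ?T' - {w})"
      proof
        assume w: "w \<in> span (g ` ?T' - {w})"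
        have t0T: "t0 \<in> span (T - {t})" using t t0 by (intro span_base) auto
        have sub: "g ` ?T' - {w} \<subseteq> span (T - {t})"
        proof
          fix x assume "x \<in> g ` ?T' - {w}"
          then obtain t' where t': "t' \<in> ?T'" "x = g t'" "t' \<noteq> t" using t by blast
          obtain d where "t' = d *s t0 + g t'" using g t' by blast
          hence "g t' = t' - d *s t0" by (simp add: algebra_simps)
          moreover have "t' \<in> span (T - {t})" using t' by (intro span_base) auto
          ultimately show "x \<in> span (T - {t})" using t0T t' by (simp add: span_diff span_sm)
        qed
        hence "span (g ` ?T' - {w}) \<subseteq> span (T - {t})"
          by (simp add: span_minimal subsp_span)
        hence wT: "g t \<in> span (T - {t})" using w t by blast
        obtain d where "t = d *s t0 + g t" using g t by blast
        hence "t \<in> span (T - {t})" using wT t0T by (metis span_add span_sm)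
        thus False using insert.prems(1) t unfolding indep_def by blast
      qed
    qed
    have "g ` ?T' \<subseteq> span S" using g by blast
    hence "finite (g ` ?T') \<and> card (g ` ?T') \<le> card S" using insert.IH indep' by blast
    hence fin: "finite ?T'" "card ?T' \<le> card S" using inj finite_image_iff card_image by metis+
    hence "finite T" by simp
    moreover have "card T = card ?T' + 1" using t0 \<open>finite T\<close>
      by (metis card_Suc_Diff1 Suc_eq_plus1)
    ultimately show ?thesis using fin insert.hyps by simp
  qed
qed

lemma indep_ordLeq:
  assumes "indep B1" "B1 \<subseteq> span B2" "B2 \<subseteq> span B1" "infinite B2"
  shows "|B1| \<le>o |B2|"
proof -
  define F where "F b = (SOME F. finite F \<and> F \<subseteq> B1 \<and> b \<in> span F)" for b
  have F: "finite (F b) \<and> F b \<subseteq> B1 \<and> b \<in> span (F b)" if "b \<in> B2" for b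
  proof -
    have "\<exists>F. finite F \<and> F \<subseteq> B1 \<and> b \<in> span F" using assms(3) that span_finite by blast
    thus ?thesis unfolding F_def by (rule someI_ex)
  qed
  let ?W = "\<Union>b\<in>B2. F b"
  have "B2 \<subseteq> span ?W" using F span_mono by blast
  hence "span B2 \<subseteq> span ?W" by (simp add: span_minimal subsp_span)
  hence B1W: "B1 \<subseteq> span ?W" using assms(2) by blast
  have "B1 \<subseteq> ?W"
  proof
    fix x assume x: "x \<in> B1"
    show "x \<in> ?W"
    proof (rule ccontr)
      assume "x \<notin> ?W"
      hence "?W \<subseteq> B1 - {x}" using F by blast
      thus False using indep_not_in_span_diff[OF assms(1) x] B1W x by blast
    qed
  qed
  hence "|B1| \<le>o |?W|" by (rule card_of_mono1)
  also have "|?W| \<le>o |B2|"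
  proof (rule card_of_UNION_ordLeq_infinite[OF assms(4)])
    show "|B2| \<le>o |B2|" by (simp add: ordLeq_refl card_of_Card_order)
    show "\<forall>i\<in>B2. |F i| \<le>o |B2|"
    proof
      fix i assume "i \<in> B2"
      hence "finite (F i)" using F by blast
      hence "|F i| <o |B2|" using finite_ordLess_infinite[OF card_of_Well_order card_of_Well_order] assms(4)
        by (simp add: Field_card_of)
      thus "|F i| \<le>o |B2|" by (rule ordLess_imp_ordLeq)
    qed
  qed
  finally show ?thesis .
qed

lemma basis_bij:
  assumes "indep B1" "indep B2" "span B1 = span B2"
  shows "\<exists>f. bij_betw f B1 B2"
proof (cases "finite B1 \<or> finite B2")
  case True
  have s12: "B1 \<subseteq> span B2" "B2 \<subseteq> span B1" using assms span_superset by auto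
  have "finite B1 \<and> finite B2 \<and> card B1 = card B2"
  proof (cases "finite B1")
    case True
    with steinitz[OF True assms(2) s12(2)] have "finite B2" "card B2 \<le> card B1" by auto
    with steinitz[OF \<open>finite B2\<close> assms(1) s12(1)] True show ?thesis by auto
  next
    case False
    hence f2: "finite B2" using \<open>finite B1 \<or> finite B2\<close> by blast
    with steinitz[OF f2 assms(1) s12(1)] False show ?thesis by auto
  qed
  thus ?thesis by (metis finite_same_card_bij)
next
  case False
  have s12: "B1 \<subseteq> span B2" "B2 \<subseteq> span B1" using assms span_superset by auto
  have "|B1| \<le>o |B2|" using indep_ordLeq[OF assms(1) s12] False by blast
  moreover have "|B2| \<le>o |B1|" using indep_ordLeq[OF assms(2) s12(2) s12(1)] False by blast
  ultimately have "|B1| =o |B2|" using ordIso_iff_ordLeq by blast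
  thus ?thesis using card_of_ordIso by blast
qed

end


context LV begin

abbreviation "klin f \<equiv> klinear sm f"

lemma klin_add: "klin f \<Longrightarrow> f (x + y) = f x + f y"
  unfolding klinear_def by blast
lemma klin_sm: "klin f \<Longrightarrow> f (a *s x) = a *s f x"
  unfolding klinear_def by blast
lemma klin_0: "klin f \<Longrightarrow> f 0 = 0"
  by (metis klin_sm sm_zero_left)
lemma klin_neg: "klin f \<Longrightarrow> f (- x) = - f x"
  by (metis klin_sm sm_neg_one)
lemma klin_diff: "klin f \<Longrightarrow> f (x - y) = f x - f y"
  by (metis diff_conv_add_uminus klin_add klin_neg)
lemma klin_I: "(\<And>x y. f (x + y) = f x + f y) \<Longrightarrow> (\<And>a x. f (a *s x) = a *s f x) \<Longrightarrow> klin f"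
  unfolding klinear_def by blast
lemma klin_comp: 
  assumes "klin f" "klin g" shows "klin (f \<circ> g)"
proof (rule klin_I)
  fix x y show "(f \<circ> g) (x + y) = (f \<circ> g) x + (f \<circ> g) y" using klin_add[OF assms(1)] klin_add[OF assms(2)] by simp
next
  fix a x show "(f \<circ> g) (a *s x) = a *s (f \<circ> g) x" using klin_sm[OF assms(1)] klin_sm[OF assms(2)] by simp
qed
lemma klin_id: "klin id"
  unfolding klinear_def by simp

lemma subsp_image:
  assumes f: "klin f" and X: "subsp X" shows "subsp (f ` X)"
proof (rule subsp_I)
  show "0 \<in> f ` X" using klin_0[OF f] subsp_0[OF X] by (metis image_eqI)
  fix x y assume "x \<in> f ` X" "y \<in> f ` X"
  then obtain u v where "u \<in> X" "v \<in> X" "x = f u" "y = f v" by blast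
  thus "x + y \<in> f ` X" using klin_add[OF f, of u v] subsp_add[OF X] by (metis image_eqI)
next
  fix a x assume "x \<in> f ` X"
  then obtain u where "u \<in> X" "x = f u" by blast
  thus "a *s x \<in> f ` X" using klin_sm[OF f, of a u] subsp_sm[OF X] by (metis image_eqI)
qed

lemma subsp_vimage: "klin f \<Longrightarrow> subsp Y \<Longrightarrow> subsp (f -` Y)"
  by (rule subsp_I) (auto simp: klin_0 klin_add klin_sm subsp_0 subsp_add subsp_sm)

lemma klin_image_span: "klin f \<Longrightarrow> f ` span S = span (f ` S)"
proof
  assume f: "klin f"
  have "subsp (f -` span (f ` S))" by (rule subsp_vimage[OF f subsp_span])
  moreover have "S \<subseteq> f -` span (f ` S)" using span_superset by blast
  ultimately have "span S \<subseteq> f -` span (f ` S)" by (rule span_minimal)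
  thus "f ` span S \<subseteq> span (f ` S)" by blast
  have "subsp (f ` span S)" by (rule subsp_image[OF f subsp_span])
  moreover have "f ` S \<subseteq> f ` span S" using span_superset by blast
  ultimately show "span (f ` S) \<subseteq> f ` span S" by (rule span_minimal)
qed

lemma klin_eq_on_span:
  assumes "klin f" "klin g" "\<forall>x\<in>S. f x = g x" "x \<in> span S"
  shows "f x = g x"
proof -
  have "subsp {x. f x = g x}"
    by (rule subsp_I) (use assms in \<open>auto simp: klin_0 klin_add klin_sm\<close>)
  hence "span S \<subseteq> {x. f x = g x}" using assms(3) by (intro span_minimal) auto
  thus ?thesis using assms(4) by blast
qed

lemma klin_inj_on:
  assumes "klin f" "subsp X" "\<And>x. x \<in> X \<Longrightarrow> f x = 0 \<Longrightarrow> x = 0"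
  shows "inj_on f X"
proof (rule inj_onI)
  fix x y assume "x \<in> X" "y \<in> X" "f x = f y"
  hence "f (x - y) = 0" "x - y \<in> X" using assms by (auto simp: klin_diff subsp_diff)
  thus "x = y" by (metis assms(3) eq_iff_diff_eq_0)
qed

lemma klin_indep_image:
  assumes f: "klin f" and inj: "inj_on f (span S)" and S: "indep S"
  shows "indep (f ` S)"
  unfolding indep_def
proof
  fix w assume "w \<in> f ` S"
  then obtain v where v: "v \<in> S" "w = f v" by blast
  have "f ` S - {w} = f ` (S - {v})"
    using v inj span_superset by (auto simp: inj_on_def)
  hence "span (f ` S - {w}) = f ` span (S - {v})" by (simp add: klin_image_span[OF f])
  show "w \<notin> span (f ` S - {w})"
  proof
    assume "w \<in> span (f ` S - {w})"
    then obtain u where u: "u \<in> span (S - {v})" "f u = f v"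
      using \<open>span (f ` S - {w}) = f ` span (S - {v})\<close> v by auto
    have "u \<in> span S" "v \<in> span S" using u span_mono[of "S - {v}" S] v span_superset by auto
    hence "u = v" using inj u unfolding inj_on_def by blast
    thus False using u S v unfolding indep_def by blast
  qed
qed

definition lcf :: "('v \<Rightarrow> 'v) \<Rightarrow> ('v \<Rightarrow> 'k) \<Rightarrow> 'v set \<Rightarrow> 'v" where
  "lcf h c G = (\<Sum>x\<in>G. c x *s h x)"

abbreviation "lc \<equiv> lcf id"

lemma sm_sum: "a *s sum f G = (\<Sum>x\<in>G. a *s f x)"
  by (induction G rule: infinite_finite_induct) (auto simp: sm_add_right)

lemma subsp_sum: "subsp X \<Longrightarrow> (\<And>x. x \<in> G \<Longrightarrow> f x \<in> X) \<Longrightarrow> sum f G \<in> X"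
  by (induction G rule: infinite_finite_induct) (auto simp: subsp_0 subsp_add)

definition supp :: "('v \<Rightarrow> 'k) \<Rightarrow> 'v set" where
  "supp c = {x. c x \<noteq> 0}"

lemma lcf_supp:
  assumes "finite G" "supp c \<subseteq> G"
  shows "lcf h c G = lcf h c (supp c)"
  unfolding lcf_def using assms
  by (intro sum.mono_neutral_right) (auto simp: supp_def)

lemma lcf_add: "lcf h (\<lambda>x. c x + d x) G = lcf h c G + lcf h d G"
  unfolding lcf_def by (simp add: sm_add_left sum.distrib)

lemma lcf_diff: "lcf h (\<lambda>x. c x - d x) G = lcf h c G - lcf h d G"
  unfolding lcf_def by (simp add: sm_diff_left sum_subtractf)

lemma lcf_sm: "lcf h (\<lambda>x. a * c x) G = a *s lcf h c G"
  unfolding lcf_def by (simp add: sm_sum sm_assoc)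

lemma lc_in_span: "G \<subseteq> S \<Longrightarrow> lc c G \<in> span S"
  unfolding lcf_def by (rule subsp_sum[OF subsp_span]) (auto intro: span_sm span_base)

lemma span_lc:
  assumes "x \<in> span S"
  shows "\<exists>c. finite (supp c) \<and> supp c \<subseteq> S \<and> x = lc c (supp c)"
proof -
  let ?R = "{x. \<exists>c. finite (supp c) \<and> supp c \<subseteq> S \<and> x = lc c (supp c)}"
  have "subsp ?R"
  proof (rule subsp_I)
    have "supp (\<lambda>_. 0) = {}" by (simp add: supp_def)
    thus "0 \<in> ?R" by (auto simp: lcf_def intro!: exI[of _ "\<lambda>_. 0"])
    fix x y assume "x \<in> ?R" "y \<in> ?R"
    then obtain c d where c: "finite (supp c)" "supp c \<subseteq> S" "x = lc c (supp c)"
      and d: "finite (supp d)" "supp d \<subseteq> S" "y = lc d (supp d)" by blast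
    let ?G = "supp c \<union> supp d"
    let ?e = "\<lambda>x. c x + d x"
    have se: "supp ?e \<subseteq> ?G" by (auto simp: supp_def)
    have "x + y = lc c ?G + lc d ?G" using c d lcf_supp[of ?G] by simp
    also have "\<dots> = lc ?e ?G" by (simp add: lcf_add)
    also have "\<dots> = lc ?e (supp ?e)" using se c d by (intro lcf_supp) auto
    finally show "x + y \<in> ?R" using se c d by (intro CollectI exI[of _ ?e]) (auto intro: finite_subset)
  next
    fix a x assume "x \<in> ?R"
    then obtain c where c: "finite (supp c)" "supp c \<subseteq> S" "x = lc c (supp c)" by blast
    let ?e = "\<lambda>x. a * c x"
    have se: "supp ?e \<subseteq> supp c" by (auto simp: supp_def)
    have "a *s x = lc ?e (supp c)" by (simp add: c lcf_sm)
    also have "\<dots> = lc ?e (supp ?e)" using se c by (intro lcf_supp) auto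
    finally show "a *s x \<in> ?R" using se c by (intro CollectI exI[of _ ?e]) (auto intro: finite_subset)
  qed
  moreover have "S \<subseteq> ?R"
  proof
    fix v assume v: "v \<in> S"
    show "v \<in> ?R"
    proof (cases "v = 0")
      case True
      have "supp (\<lambda>_. 0) = {}" by (simp add: supp_def)
      thus ?thesis using True by (auto simp: lcf_def intro!: exI[of _ "\<lambda>_. 0"])
    next
      case False
      let ?e = "\<lambda>x. if x = v then (1::'k) else 0"
      have "supp ?e = {v}" by (auto simp: supp_def)
      thus ?thesis using v by (auto simp: lcf_def intro!: exI[of _ ?e])
    qed
  qed
  ultimately have "span S \<subseteq> ?R" by (rule span_minimal)
  thus ?thesis using assms by blast
qed

lemma indep_lc_zero:
  assumes E: "indep E" and G: "finite G" "G \<subseteq> E" and z: "lc c G = 0"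
  shows "\<forall>x\<in>G. c x = 0"
proof (rule ccontr)
  assume "\<not> (\<forall>x\<in>G. c x = 0)"
  then obtain x0 where x0: "x0 \<in> G" "c x0 \<noteq> 0" by blast
  have "lc c G = c x0 *s x0 + lc c (G - {x0})"
    unfolding lcf_def using G x0 by (simp add: sum.remove)
  hence "c x0 *s x0 = - lc c (G - {x0})" using z by (simp add: eq_neg_iff_add_eq_0)
  hence "x0 = inverse (c x0) *s (- lc c (G - {x0}))" using x0 by (metis sm_inv)
  moreover have "lc c (G - {x0}) \<in> span (E - {x0})" using G by (intro lc_in_span) auto
  ultimately have "x0 \<in> span (E - {x0})" by (metis span_neg span_sm)
  thus False using E x0 G unfolding indep_def by blast
qed

end


context LV begin

definition rep :: "'v set \<Rightarrow> ('v \<Rightarrow> 'k) \<Rightarrow> 'v \<Rightarrow> bool" where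
  "rep E c v \<longleftrightarrow> finite (supp c) \<and> supp c \<subseteq> E \<and> v = lc c (supp c)"

lemma rep_unique:
  assumes E: "indep E" and c: "rep E c v" and d: "rep E d v"
  shows "c = d"
proof
  fix x
  let ?G = "supp c \<union> supp d"
  have G: "finite ?G" "?G \<subseteq> E" using c d unfolding rep_def by blast+
  have 1: "lc c ?G = lc c (supp c)" by (rule lcf_supp) (use G in blast)+
  have 2: "lc d ?G = lc d (supp d)" by (rule lcf_supp) (use G in blast)+
  have "lc c ?G = v" "lc d ?G = v" using c d 1 2 unfolding rep_def by simp_all
  hence "lc (\<lambda>x. c x - d x) ?G = 0" by (simp add: lcf_diff)
  hence "\<forall>x\<in>?G. c x - d x = 0" by (rule indep_lc_zero[OF E G])
  hence "\<forall>x\<in>?G. c x = d x" by simp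
  moreover have "x \<notin> ?G \<Longrightarrow> c x = d x" by (simp add: supp_def)
  ultimately show "c x = d x" by blast
qed


lemma rep_exists: "x \<in> span E \<Longrightarrow> \<exists>c. rep E c x"
  unfolding rep_def using span_lc by blast

definition coef :: "'v set \<Rightarrow> 'v \<Rightarrow> 'v \<Rightarrow> 'k" where
  "coef E v = (THE c. rep E c v)"

lemma coef_eq: "indep E \<Longrightarrow> rep E c v \<Longrightarrow> coef E v = c"
  unfolding coef_def using rep_unique by blast

lemma coef: "indep E \<Longrightarrow> v \<in> span E \<Longrightarrow> rep E (coef E v) v"
  using rep_exists coef_eq by metis

lemma rep_add:
  assumes c: "rep E c v" and d: "rep E d w"
  shows "rep E (\<lambda>x. c x + d x) (v + w)"
proof -
  let ?G = "supp c \<union> supp d"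
  let ?e = "\<lambda>x. c x + d x"
  have se: "supp ?e \<subseteq> ?G" by (auto simp: supp_def)
  have G: "finite ?G" "?G \<subseteq> E" using c d unfolding rep_def by auto
  have 1: "lc c ?G = lc c (supp c)" by (rule lcf_supp) (use G in blast)+
  have 2: "lc d ?G = lc d (supp d)" by (rule lcf_supp) (use G in blast)+
  have "v + w = lc c ?G + lc d ?G" using c d 1 2 unfolding rep_def by simp
  also have "\<dots> = lc ?e ?G" by (simp add: lcf_add)
  also have "\<dots> = lc ?e (supp ?e)" using se G by (intro lcf_supp) auto
  finally show ?thesis unfolding rep_def using se G by (auto intro: finite_subset)
qed

lemma rep_sm:
  assumes c: "rep E c v"
  shows "rep E (\<lambda>x. a * c x) (a *s v)"
proof -
  let ?e = "\<lambda>x. a * c x"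
  have se: "supp ?e \<subseteq> supp c" by (auto simp: supp_def)
  have "a *s v = lc ?e (supp c)" using c by (simp add: rep_def lcf_sm)
  also have "\<dots> = lc ?e (supp ?e)" using se c unfolding rep_def by (intro lcf_supp) auto
  finally show ?thesis using c se unfolding rep_def by (auto intro: finite_subset)
qed

lemma rep_base: "e \<in> E \<Longrightarrow> rep E (\<lambda>x. if x = e then 1 else 0) e"
proof -
  assume "e \<in> E"
  have "supp (\<lambda>x. if x = e then (1::'k) else 0) = {e}" by (auto simp: supp_def)
  thus ?thesis using \<open>e \<in> E\<close> unfolding rep_def by (simp add: lcf_def)
qed

lemma lin_ext:
  assumes E: "indep E" "span E = UNIV"
  shows "\<exists>F. klin F \<and> (\<forall>e\<in>E. F e = h e) \<and>
            (inj_on h E \<and> indep (h ` E) \<longrightarrow> inj F) \<and> (span (h ` E) = UNIV \<longrightarrow> surj F)"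
proof -
  define F where "F v = lcf h (coef E v) (supp (coef E v))" for v
  have cf: "rep E (coef E v) v" for v using coef[OF E(1)] E(2) by blast
  have Fadd: "F (v + w) = F v + F w" for v w
  proof -
    let ?c = "coef E v" and ?d = "coef E w"
    have eq: "coef E (v + w) = (\<lambda>x. ?c x + ?d x)" using coef_eq[OF E(1) rep_add[OF cf cf]] .
    let ?G = "supp ?c \<union> supp ?d"
    have G: "finite ?G" using cf unfolding rep_def by auto
    have se: "supp (\<lambda>x. ?c x + ?d x) \<subseteq> ?G" by (auto simp: supp_def)
    have "F (v + w) = lcf h (\<lambda>x. ?c x + ?d x) ?G" unfolding F_def eq using lcf_supp[OF G se] by simp
    also have "\<dots> = lcf h ?c ?G + lcf h ?d ?G" by (rule lcf_add)
    also have "\<dots> = F v + F w" unfolding F_def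
      using lcf_supp[OF G, of ?c h] lcf_supp[OF G, of ?d h] by simp
    finally show ?thesis .
  qed
  have Fsm: "F (a *s v) = a *s F v" for a v
  proof -
    let ?c = "coef E v"
    have eq: "coef E (a *s v) = (\<lambda>x. a * ?c x)" using coef_eq[OF E(1) rep_sm[OF cf]] .
    have G: "finite (supp ?c)" using cf unfolding rep_def by auto
    have se: "supp (\<lambda>x. a * ?c x) \<subseteq> supp ?c" by (auto simp: supp_def)
    have "F (a *s v) = lcf h (\<lambda>x. a * ?c x) (supp ?c)" unfolding F_def eq using lcf_supp[OF G se] by simp
    also have "\<dots> = a *s F v" unfolding F_def by (rule lcf_sm)
    finally show ?thesis .
  qed
  have kF: "klin F" using Fadd Fsm by (intro klin_I)
  have Fe: "F e = h e" if "e \<in> E" for e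
  proof -
    have eq: "coef E e = (\<lambda>x. if x = e then 1 else 0)" using coef_eq[OF E(1) rep_base[OF that]] .
    have "supp (\<lambda>x. if x = e then (1::'k) else 0) = {e}" by (auto simp: supp_def)
    thus ?thesis unfolding F_def eq by (simp add: lcf_def)
  qed
  have inj: "inj F" if hinj: "inj_on h E" and hind: "indep (h ` E)"
  proof -
    have "inj_on F UNIV"
    proof (rule klin_inj_on[OF kF subsp_UNIV])
      fix v assume "F v = 0"
      let ?c = "coef E v"
      let ?S = "supp ?c"
      have S: "finite ?S" "?S \<subseteq> E" "v = lc ?c ?S" using cf unfolding rep_def by auto
      have injS: "inj_on h ?S" using hinj S(2) inj_on_subset by blast
      let ?c' = "\<lambda>y. ?c (inv_into ?S h y)"
      have "lc ?c' (h ` ?S) = lcf h ?c ?S"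
        unfolding lcf_def using injS by (simp add: sum.reindex)
      also have "\<dots> = 0" using \<open>F v = 0\<close> unfolding F_def .
      finally have "\<forall>y\<in>h ` ?S. ?c' y = 0"
        using indep_lc_zero[OF hind, of "h ` ?S"] S by blast
      hence "\<forall>x\<in>?S. ?c x = 0" using injS by auto
      hence "?S = {}" by (auto simp: supp_def)
      thus "v = 0" using S(3) by (simp add: lcf_def)
    qed
    thus ?thesis by simp
  qed
  have surj: "surj F" if "span (h ` E) = UNIV"
  proof -
    have "F ` E = h ` E" using Fe by auto
    hence "F ` span E = UNIV" using klin_image_span[OF kF, of E] that by simp
    thus ?thesis using E(2) by simp
  qed
  show ?thesis using kF Fe inj surj by blast
qed

end


context LV begin

lemma distant_sym:
  assumes "distant X Y" shows "distant Y X"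
proof -
  have "Y \<inter> X = {0}" using assms unfolding distant_def by blast
  moreover have "v \<in> {y + x | y x. y \<in> Y \<and> x \<in> X}" for v
  proof -
    obtain x y where "x \<in> X" "y \<in> Y" "v = x + y" using assms unfolding distant_def by blast
    hence "v = y + x" "y \<in> Y" "x \<in> X" by (simp_all add: add.commute)
    thus ?thesis by blast
  qed
  ultimately show ?thesis unfolding distant_def by blast
qed

lemma distant_decomp: "distant X Y \<Longrightarrow> \<exists>x y. x \<in> X \<and> y \<in> Y \<and> v = x + y"
  unfolding distant_def by blast

lemma distant_Int: "distant X Y \<Longrightarrow> x \<in> X \<Longrightarrow> x \<in> Y \<Longrightarrow> x = 0"
  unfolding distant_def by blast

lemma distant_unique:
  assumes "distant X Y" "subsp X" "subsp Y" "x1 \<in> X" "x2 \<in> X" "y1 \<in> Y" "y2 \<in> Y" "x1 + y1 = x2 + y2"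
  shows "x1 = x2 \<and> y1 = y2"
proof -
  have "x1 - x2 = y2 - y1" using assms(8) by (simp add: algebra_simps)
  moreover have "x1 - x2 \<in> X" "y2 - y1 \<in> Y" using assms by (auto simp: subsp_diff)
  ultimately have "x1 - x2 = 0" using distant_Int[OF assms(1)] by metis
  thus ?thesis using assms(8) by simp
qed

lemma distant_I:
  assumes "\<And>v. v \<in> X \<Longrightarrow> v \<in> Y \<Longrightarrow> v = 0" "subsp X" "subsp Y"
    "\<And>v. \<exists>x y. x \<in> X \<and> y \<in> Y \<and> v = x + y"
  shows "distant X Y"
  unfolding distant_def using assms subsp_0 by blast

lemma proj_exists:
  assumes D: "distant X Y" and X: "subsp X" and Y: "subsp Y"
  shows "\<exists>p. klin p \<and> (\<forall>v. p v \<in> X \<and> v - p v \<in> Y)"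
proof -
  have ex: "\<exists>x. x \<in> X \<and> v - x \<in> Y" for v
    using distant_decomp[OF D, of v] by (metis add_diff_cancel_left')
  have un: "x1 = x2" if "x1 \<in> X" "v - x1 \<in> Y" "x2 \<in> X" "v - x2 \<in> Y" for v x1 x2
    using distant_unique[OF D X Y that(1) that(3) that(2) that(4)] by simp
  define p where "p v = (THE x. x \<in> X \<and> v - x \<in> Y)" for v
  have p: "p v \<in> X \<and> v - p v \<in> Y" for v
  proof -
    have "\<exists>!x. x \<in> X \<and> v - x \<in> Y" using ex[of v] un[of _ v] by blast
    thus ?thesis unfolding p_def by (rule theI')
  qed
  have pc: "p v = x" if "x \<in> X" "v - x \<in> Y" for v x
    using un[of "p v" v x] p[of v] that by blast
  have "klin p"
  proof (rule klin_I)
    fix v w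
    have 1: "p v + p w \<in> X" using p X by (simp add: subsp_add)
    have 2: "(v + w) - (p v + p w) = (v - p v) + (w - p w)" by (simp add: algebra_simps)
    have 3: "(v - p v) + (w - p w) \<in> Y" using p Y by (simp add: subsp_add)
    show "p (v + w) = p v + p w" using 1 2 3 pc by metis
  next
    fix a v
    have 1: "a *s p v \<in> X" using p X by (simp add: subsp_sm)
    have 2: "a *s v - a *s p v = a *s (v - p v)" by (simp add: sm_diff_right)
    have 3: "a *s (v - p v) \<in> Y" using p Y by (simp add: subsp_sm)
    show "p (a *s v) = a *s p v" using 1 2 3 pc by metis
  qed
  thus ?thesis using p by blast
qed

lemma proj_id:
  assumes "distant X Y" "subsp X" "subsp Y" "\<forall>v. p v \<in> X \<and> v - p v \<in> Y" "x \<in> X"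
  shows "p x = x"
proof -
  have "p x + (x - p x) = x + 0" by simp
  thus ?thesis using distant_unique[OF assms(1-3), of "p x" x "x - p x" 0] assms subsp_0 by blast
qed

lemma proj_zero:
  assumes "distant X Y" "subsp X" "subsp Y" "\<forall>v. p v \<in> X \<and> v - p v \<in> Y" "y \<in> Y"
  shows "p y = 0"
proof -
  have "p y + (y - p y) = 0 + y" by simp
  thus ?thesis using distant_unique[OF assms(1-3), of "p y" 0 "y - p y" y] assms subsp_0 by blast
qed

lemma complement_exists:
  assumes X: "subsp X"
  shows "\<exists>Y. subsp Y \<and> distant X Y"
proof -
  let ?A = "{Y. subsp Y \<and> X \<inter> Y = {0}}"
  have "\<exists>M\<in>?A. \<forall>Z\<in>?A. M \<subseteq> Z \<longrightarrow> Z = M"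
  proof (rule subset_Zorn_nonempty)
    have "subsp {0}" by (rule subsp_I) auto
    hence "{0} \<in> ?A" using subsp_0[OF X] by blast
    thus "?A \<noteq> {}" by blast
    fix C assume C: "C \<noteq> {}" "subset.chain ?A C"
    have sub: "\<And>Y. Y \<in> C \<Longrightarrow> subsp Y" "\<And>Y. Y \<in> C \<Longrightarrow> X \<inter> Y = {0}"
      using C unfolding subset_chain_def by blast+
    have ch: "\<And>Y Z. Y \<in> C \<Longrightarrow> Z \<in> C \<Longrightarrow> Y \<subseteq> Z \<or> Z \<subseteq> Y"
      using C unfolding subset_chain_def by blast
    have "subsp (\<Union>C)"
    proof (rule subsp_I)
      obtain Y where "Y \<in> C" using C by blast
      thus "0 \<in> \<Union>C" using sub subsp_0 by blast
    next
      fix x y assume "x \<in> \<Union>C" "y \<in> \<Union>C"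
      then obtain Y Z where YZ: "Y \<in> C" "Z \<in> C" "x \<in> Y" "y \<in> Z" by blast
      show "x + y \<in> \<Union>C"
      proof (cases "Y \<subseteq> Z")
        case True thus ?thesis using YZ sub subsp_add by blast
      next
        case False hence "Z \<subseteq> Y" using ch YZ by blast
        thus ?thesis using YZ sub subsp_add by blast
      qed
    next
      fix a x assume "x \<in> \<Union>C"
      thus "a *s x \<in> \<Union>C" using sub subsp_sm by blast
    qed
    moreover have "X \<inter> \<Union>C = {0}"
    proof
      show "X \<inter> \<Union>C \<subseteq> {0}" using sub by blast
      obtain Y where "Y \<in> C" using C by blast
      thus "{0} \<subseteq> X \<inter> \<Union>C" using sub subsp_0 X by blast
    qed
    ultimately show "\<Union>C \<in> ?A" by blast
  qed
  then obtain M where M: "subsp M" "X \<inter> M = {0}" and max: "\<forall>Z\<in>?A. M \<subseteq> Z \<longrightarrow> Z = M" by blast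
  have "distant X M"
  proof (rule distant_I)
    show "\<And>v. v \<in> X \<Longrightarrow> v \<in> M \<Longrightarrow> v = 0" using M by blast
    show "subsp X" "subsp M" by fact+
    fix v
    show "\<exists>x y. x \<in> X \<and> y \<in> M \<and> v = x + y"
    proof (rule ccontr)
      assume nv: "\<not> (\<exists>x y. x \<in> X \<and> y \<in> M \<and> v = x + y)"
      let ?Y = "span (insert v M)"
      have spY: "?Y = {a *s v + t | a t. t \<in> M}" using span_insert[of v M] span_of_subsp[OF M(1)] by simp
      have "X \<inter> ?Y \<subseteq> {0}"
      proof
        fix x assume "x \<in> X \<inter> ?Y"
        then obtain a t where x: "x \<in> X" "t \<in> M" "x = a *s v + t" using spY by blast
        show "x \<in> {0}"
        proof (cases "a = 0")
          case True
          hence "x \<in> M" using x by simp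
          thus ?thesis using x M by blast
        next
          case False
          have "v = inverse a *s x + inverse a *s (- t)"
            using False x by (simp add: sm_add_right[symmetric] sm_inv)
          moreover have "inverse a *s x \<in> X" "inverse a *s (- t) \<in> M"
            using x X M by (auto simp: subsp_sm subsp_neg)
          ultimately show ?thesis using nv by blast
        qed
      qed
      hence "?Y \<in> ?A" using subsp_span subsp_0[OF X] span_0 by blast
      moreover have "M \<subseteq> ?Y" using span_superset by blast
      ultimately have "?Y = M" using max by blast
      hence "v \<in> M" using span_superset by blast
      hence "v = 0 + v" "0 \<in> X" using subsp_0[OF X] by auto
      thus False using nv \<open>v \<in> M\<close> by blast
    qed
  qed
  thus ?thesis using M by blast
qed

end


context LV begin

definition lin_on :: "'v set \<Rightarrow> ('v \<Rightarrow> 'v) \<Rightarrow> bool" where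
  "lin_on X g \<longleftrightarrow> (\<forall>x\<in>X. \<forall>y\<in>X. g (x + y) = g x + g y) \<and> (\<forall>a. \<forall>x\<in>X. g (a *s x) = a *s g x)"

lemma mem_coset: "w \<in> coset X u \<longleftrightarrow> w - u \<in> X"
proof
  assume "w \<in> coset X u"
  then obtain x where "x \<in> X" "w = u + x" unfolding coset_def by blast
  thus "w - u \<in> X" by simp
next
  assume "w - u \<in> X"
  moreover have "w = u + (w - u)" by simp
  ultimately show "w \<in> coset X u" unfolding coset_def by blast
qed

lemma coset_eq:
  assumes X: "subsp X" shows "coset X u = coset X w \<longleftrightarrow> u - w \<in> X"
proof
  assume "coset X u = coset X w"
  moreover have "u \<in> coset X u" by (simp add: mem_coset subsp_0[OF X])
  ultimately show "u - w \<in> X" using mem_coset by blast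
next
  assume uw: "u - w \<in> X"
  show "coset X u = coset X w"
  proof (rule set_eqI)
    fix z
    have e1: "z - w = (z - u) + (u - w)" by simp
    have e2: "z - u = (z - w) - (u - w)" by simp
    have "z - u \<in> X \<longleftrightarrow> z - w \<in> X"
    proof
      assume "z - u \<in> X" thus "z - w \<in> X" using e1 uw subsp_add[OF X] by metis
    next
      assume "z - w \<in> X" thus "z - u \<in> X" using e2 uw subsp_diff[OF X] by metis
    qed
    thus "z \<in> coset X u \<longleftrightarrow> z \<in> coset X w" by (simp add: mem_coset)
  qed
qed

lemma G_subsp: "X \<in> Gr sm \<Longrightarrow> subsp X"
  unfolding Gr_def by blast

lemma G_intro:
  assumes X: "subsp X" and Y: "subsp Y" and D: "distant X Y" and g: "lin_on X g"
    and inj: "inj_on g X" and im: "g ` X = Y"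
  shows "X \<in> Gr sm"
proof -
  define f where "f x = coset X (g x)" for x
  have gY: "x \<in> X \<Longrightarrow> g x \<in> Y" for x using im by blast
  have "inj_on f X"
  proof (rule inj_onI)
    fix x1 x2 assume a: "x1 \<in> X" "x2 \<in> X" "f x1 = f x2"
    hence "g x1 - g x2 \<in> X" using coset_eq[OF X] unfolding f_def by blast
    moreover have "g x1 - g x2 \<in> Y" using a gY subsp_diff[OF Y] by blast
    ultimately have "g x1 - g x2 = 0" using distant_Int[OF D] by blast
    hence "g x1 = g x2" by simp
    thus "x1 = x2" using inj a unfolding inj_on_def by blast
  qed
  moreover have "f ` X = quotient_space X"
  proof
    show "f ` X \<subseteq> quotient_space X" unfolding f_def quotient_space_def by blast
    show "quotient_space X \<subseteq> f ` X"
    proof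
      fix Q assume "Q \<in> quotient_space X"
      then obtain v where Q: "Q = coset X v" unfolding quotient_space_def by blast
      obtain x y where xy: "x \<in> X" "y \<in> Y" "v = x + y" using distant_decomp[OF D] by blast
      obtain x' where x': "x' \<in> X" "y = g x'" using xy im by blast
      have "v - y \<in> X" using xy by simp
      hence "Q = f x'" unfolding Q f_def x'(2)[symmetric] using coset_eq[OF X] by blast
      thus "Q \<in> f ` X" using x' by blast
    qed
  qed
  ultimately have bij: "bij_betw f X (quotient_space X)" unfolding bij_betw_def by blast
  have add: "\<forall>a\<in>X. \<forall>b\<in>X. \<forall>u\<in>f a. \<forall>w\<in>f b. f (a + b) = coset X (u + w)"
  proof (intro ballI)
    fix a b u w assume a: "a \<in> X" "b \<in> X" "u \<in> f a" "w \<in> f b"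
    have "u - g a \<in> X" "w - g b \<in> X" using a unfolding f_def by (simp_all add: mem_coset)
    hence "- ((u - g a) + (w - g b)) \<in> X"
      using subsp_add[OF X] subsp_neg[OF X] by blast
    moreover have "- ((u - g a) + (w - g b)) = (g a + g b) - (u + w)" by (simp add: algebra_simps)
    ultimately have "(g a + g b) - (u + w) \<in> X" by metis
    moreover have "g (a + b) = g a + g b" using g a unfolding lin_on_def by blast
    ultimately show "f (a + b) = coset X (u + w)" unfolding f_def using coset_eq[OF X] by simp
  qed
  have smul: "\<forall>c. \<forall>a\<in>X. \<forall>u\<in>f a. f (c *s a) = coset X (c *s u)"
  proof (intro allI ballI)
    fix c a u assume a: "a \<in> X" "u \<in> f a"
    have "u - g a \<in> X" using a unfolding f_def by (simp add: mem_coset)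
    hence "c *s (g a - u) \<in> X" using subsp_sm[OF X] subsp_neg[OF X] by (metis minus_diff_eq)
    hence "c *s g a - c *s u \<in> X" by (simp add: sm_diff_right)
    moreover have "g (c *s a) = c *s g a" using g a unfolding lin_on_def by blast
    ultimately show "f (c *s a) = coset X (c *s u)" unfolding f_def using coset_eq[OF X] by simp
  qed
  have "iso_to_quotient sm X" unfolding iso_to_quotient_def using bij add smul by blast
  thus ?thesis unfolding Gr_def using X by blast
qed

lemma G_elim:
  assumes G: "X \<in> Gr sm"
  shows "\<exists>Y g. subsp Y \<and> distant X Y \<and> klin g \<and> inj_on g X \<and> g ` X = Y"
proof -
  have X: "subsp X" using G by (rule G_subsp)
  obtain f where bij: "bij_betw f X (quotient_space X)"
    and add: "\<forall>a\<in>X. \<forall>b\<in>X. \<forall>u\<in>f a. \<forall>w\<in>f b. f (a + b) = coset X (u + w)"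
    and smul: "\<forall>c. \<forall>a\<in>X. \<forall>u\<in>f a. f (c *s a) = coset X (c *s u)"
    using G unfolding Gr_def iso_to_quotient_def by blast
  obtain Y where Y: "subsp Y" and D: "distant X Y" using complement_exists[OF X] by blast
  obtain p where p: "klin p" "\<forall>v. p v \<in> X \<and> v - p v \<in> Y" using proj_exists[OF D X Y] by blast
  have self: "u \<in> coset X u" for u by (simp add: mem_coset subsp_0[OF X])
  have coset_of: "Q = coset X y" if Qq: "Q \<in> quotient_space X" and yQ: "y \<in> Q" for Q y
  proof -
    obtain u where u: "Q = coset X u" using Qq unfolding quotient_space_def by blast
    hence "y - u \<in> X" using yQ mem_coset by blast
    thus ?thesis using u coset_eq[OF X] by (metis minus_diff_eq subsp_neg[OF X])
  qed
  have ex1: "\<exists>!y. y \<in> Y \<and> y \<in> Q" if Qq: "Q \<in> quotient_space X" for Q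
  proof -
    obtain u where u: "Q = coset X u" using Qq unfolding quotient_space_def by blast
    obtain x y where xy: "x \<in> X" "y \<in> Y" "u = x + y" using distant_decomp[OF D] by blast
    have "y - u = - x" using xy by simp
    hence "y - u \<in> X" using subsp_neg[OF X xy(1)] by simp
    hence yQ: "y \<in> Q" using u mem_coset by blast
    have "y' = y" if "y' \<in> Y" "y' \<in> Q" for y'
    proof -
      have "y' - u \<in> X" using that u mem_coset by blast
      hence "(y' - u) - (y - u) \<in> X" using \<open>y - u \<in> X\<close> subsp_diff[OF X] by blast
      moreover have "(y' - u) - (y - u) = y' - y" by simp
      ultimately have "y' - y \<in> X" by metis
      moreover have "y' - y \<in> Y" using that xy subsp_diff[OF Y] by blast
      ultimately show ?thesis using distant_Int[OF D] by (metis eq_iff_diff_eq_0)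
    qed
    thus ?thesis using yQ xy by blast
  qed
  have fQ: "x \<in> X \<Longrightarrow> f x \<in> quotient_space X" for x using bij unfolding bij_betw_def by blast
  define g0 where "g0 x = (THE y. y \<in> Y \<and> y \<in> f x)" for x
  have g0: "g0 x \<in> Y \<and> g0 x \<in> f x" if "x \<in> X" for x
    unfolding g0_def using ex1[OF fQ[OF that]] by (rule theI')
  have g0u: "g0 x = y" if "x \<in> X" "y \<in> Y" "y \<in> f x" for x y
    using ex1[OF fQ[OF that(1)]] g0[OF that(1)] that by blast
  have g0add: "g0 (a + b) = g0 a + g0 b" if "a \<in> X" "b \<in> X" for a b
  proof -
    have "g0 a \<in> f a" "g0 b \<in> f b" using g0 that by blast+
    hence "f (a + b) = coset X (g0 a + g0 b)" using add that by blast
    hence "g0 a + g0 b \<in> f (a + b)" using self by simp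
    moreover have "g0 a + g0 b \<in> Y" using g0 that subsp_add[OF Y] by blast
    moreover have "a + b \<in> X" using that subsp_add[OF X] by blast
    ultimately show ?thesis using g0u by blast
  qed
  have g0sm: "g0 (c *s a) = c *s g0 a" if "a \<in> X" for a c
  proof -
    have "g0 a \<in> f a" using g0 that by blast
    hence "f (c *s a) = coset X (c *s g0 a)" using smul that by blast
    hence "c *s g0 a \<in> f (c *s a)" using self by simp
    moreover have "c *s g0 a \<in> Y" using g0 that subsp_sm[OF Y] by blast
    moreover have "c *s a \<in> X" using that subsp_sm[OF X] by blast
    ultimately show ?thesis using g0u by blast
  qed
  define g where "g v = g0 (p v)" for v
  have kg: "klin g"
  proof (rule klin_I)
    fix v w
    have "p (v + w) = p v + p w" by (rule klin_add[OF p(1)])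
    moreover have "p v \<in> X" "p w \<in> X" using p(2) by blast+
    ultimately show "g (v + w) = g v + g w" by (simp add: g_def g0add)
  next
    fix a v
    have "p (a *s v) = a *s p v" by (rule klin_sm[OF p(1)])
    moreover have "p v \<in> X" using p(2) by blast
    ultimately show "g (a *s v) = a *s g v" by (simp add: g_def g0sm)
  qed
  have px: "x \<in> X \<Longrightarrow> p x = x" for x using proj_id[OF D X Y p(2)] by blast
  have "inj_on g X"
  proof (rule inj_onI)
    fix a b assume ab: "a \<in> X" "b \<in> X" "g a = g b"
    hence "g0 a = g0 b" unfolding g_def using px by simp
    have "f a = coset X (g0 a)" by (rule coset_of[OF fQ[OF ab(1)]]) (use g0 ab in blast)
    moreover have "f b = coset X (g0 b)" by (rule coset_of[OF fQ[OF ab(2)]]) (use g0 ab in blast)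
    ultimately have "f a = coset X (g0 a)" "f b = coset X (g0 a)" using \<open>g0 a = g0 b\<close> by simp_all
    hence "f a = f b" by simp
    thus "a = b" using bij ab unfolding bij_betw_def inj_on_def by blast
  qed
  moreover have "g ` X = Y"
  proof
    show "g ` X \<subseteq> Y"
    proof
      fix z assume "z \<in> g ` X"
      then obtain a where a: "a \<in> X" "z = g a" by blast
      hence "z = g0 a" unfolding g_def using px by simp
      thus "z \<in> Y" using g0 a by blast
    qed
    show "Y \<subseteq> g ` X"
    proof
      fix y assume y: "y \<in> Y"
      have "coset X y \<in> quotient_space X" unfolding quotient_space_def by (rule rangeI)
      hence "coset X y \<in> f ` X" using bij by (simp add: bij_betw_def)
      then obtain a where a: "a \<in> X" "f a = coset X y" by (metis imageE)
      hence "y \<in> f a" using self by simp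
      hence "g0 a = y" by (rule g0u[OF a(1) y])
      hence "g a = y" unfolding g_def using px a by simp
      thus "y \<in> g ` X" using a by blast
    qed
  qed
  ultimately have "subsp Y \<and> distant X Y \<and> klin g \<and> inj_on g X \<and> g ` X = Y" using Y D kg by simp
  thus ?thesis by (intro exI[of _ Y] exI[of _ g])
qed

end


context LV begin

lemma klin_lin_on: assumes "klin g" shows "lin_on X g"
  unfolding lin_on_def by (simp add: klin_add[OF assms] klin_sm[OF assms])

abbreviation im :: "('v \<Rightarrow> 'v) \<Rightarrow> 'v set set \<Rightarrow> 'v set set" where
  "im f R \<equiv> (\<lambda>X. f ` X) ` R"

lemma Aut_klin: "f \<in> Aut sm \<Longrightarrow> klin f"
  unfolding Aut_def by blast
lemma Aut_bij: "f \<in> Aut sm \<Longrightarrow> bij f"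
  unfolding Aut_def by blast
lemma Aut_inj: "f \<in> Aut sm \<Longrightarrow> inj f"
  unfolding Aut_def bij_def by blast
lemma Aut_surj: "f \<in> Aut sm \<Longrightarrow> surj f"
  unfolding Aut_def bij_def by blast

lemma Aut_inv: assumes f: "f \<in> Aut sm" shows "inv f \<in> Aut sm"
proof -
  have b: "bij f" using f by (rule Aut_bij)
  have k: "klin f" using f by (rule Aut_klin)
  have fi: "f (inv f x) = x" for x using b by (simp add: bij_is_surj surj_f_inv_f)
  have inj: "inj f" using b by (simp add: bij_is_inj)
  have "klin (inv f)"
  proof (rule klin_I)
    fix x y
    have "f (inv f x + inv f y) = x + y" using klin_add[OF k] fi by simp
    hence "f (inv f (x + y)) = f (inv f x + inv f y)" using fi by simp
    thus "inv f (x + y) = inv f x + inv f y" using inj by (simp add: inj_eq)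
  next
    fix a x
    have "f (a *s inv f x) = a *s x" using klin_sm[OF k] fi by simp
    hence "f (inv f (a *s x)) = f (a *s inv f x)" using fi by simp
    thus "inv f (a *s x) = a *s inv f x" using inj by (simp add: inj_eq)
  qed
  moreover have "bij (inv f)" using b by (rule bij_imp_bij_inv)
  ultimately show ?thesis unfolding Aut_def by blast
qed

lemma Aut_inv_im: "f \<in> Aut sm \<Longrightarrow> inv f ` (f ` X) = X"
  by (rule image_inv_f_f[OF Aut_inj])
lemma Aut_im_inv: "f \<in> Aut sm \<Longrightarrow> f ` (inv f ` X) = X"
  by (rule image_f_inv_f[OF Aut_surj])
lemma Aut_inv_im_im: "f \<in> Aut sm \<Longrightarrow> im (inv f) (im f R) = R"
proof -
  assume f: "f \<in> Aut sm"
  have "im (inv f) (im f R) = (\<lambda>X. inv f ` (f ` X)) ` R" by (simp add: image_image)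
  also have "\<dots> = R" using Aut_inv_im[OF f] by simp
  finally show ?thesis .
qed
lemma Aut_im_inv_im: "f \<in> Aut sm \<Longrightarrow> im f (im (inv f) R) = R"
proof -
  assume f: "f \<in> Aut sm"
  have "im f (im (inv f) R) = (\<lambda>X. f ` (inv f ` X)) ` R" by (simp add: image_image)
  also have "\<dots> = R" using Aut_im_inv[OF f] by simp
  finally show ?thesis .
qed

lemma Aut_subsp: "f \<in> Aut sm \<Longrightarrow> subsp X \<Longrightarrow> subsp (f ` X)"
  using subsp_image Aut_klin by blast

lemma Aut_distant:
  assumes f: "f \<in> Aut sm" and D: "distant X Y" and X: "subsp X" and Y: "subsp Y"
  shows "distant (f ` X) (f ` Y)"
proof (rule distant_I)
  show "subsp (f ` X)" "subsp (f ` Y)" using Aut_subsp f X Y by blast+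
  fix v assume "v \<in> f ` X" "v \<in> f ` Y"
  then obtain x y where "x \<in> X" "y \<in> Y" "v = f x" "v = f y" by blast
  hence "x = y" using Aut_inj[OF f] by (simp add: inj_eq)
  hence "x = 0" using \<open>x \<in> X\<close> \<open>y \<in> Y\<close> distant_Int[OF D] by blast
  thus "v = 0" using \<open>v = f x\<close> klin_0[OF Aut_klin[OF f]] by simp
next
  fix v
  obtain x y where "x \<in> X" "y \<in> Y" "inv f v = x + y" using distant_decomp[OF D] by blast
  hence "v = f x + f y" using klin_add[OF Aut_klin[OF f]] Aut_surj[OF f]
    by (metis surj_f_inv_f)
  thus "\<exists>x y. x \<in> f ` X \<and> y \<in> f ` Y \<and> v = x + y" using \<open>x \<in> X\<close> \<open>y \<in> Y\<close> by blast
qed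

lemma Aut_point:
  assumes f: "f \<in> Aut sm" and P: "is_point sm P" shows "is_point sm (f ` P)"
proof -
  obtain v where v: "v \<noteq> 0" "P = range (\<lambda>c. c *s v)" using P unfolding is_point_def by blast
  have "f ` P = (\<lambda>c. f (c *s v)) ` UNIV" using v(2) by (simp add: image_image)
  also have "\<dots> = range (\<lambda>c. c *s f v)" using klin_sm[OF Aut_klin[OF f]] by simp
  finally have "f ` P = range (\<lambda>c. c *s f v)" .
  moreover have "f v \<noteq> 0" using v(1) klin_0[OF Aut_klin[OF f]] Aut_inj[OF f] by (metis injD)
  ultimately show ?thesis unfolding is_point_def by blast
qed

lemma Aut_line:
  assumes f: "f \<in> Aut sm" and L: "is_line sm L" shows "is_line sm (f ` L)"
proof -
  have k: "klin f" using f by (rule Aut_klin)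
  obtain u v where ind: "\<forall>a b. a *s u + b *s v = 0 \<longrightarrow> a = 0 \<and> b = 0"
    and Ld: "L = {a *s u + b *s v | a b. True}" using L unfolding is_line_def by blast
  have fl: "f (a *s u + b *s v) = a *s f u + b *s f v" for a b using klin_add[OF k] klin_sm[OF k] by simp
  have "f ` L = {a *s f u + b *s f v | a b. True}"
  proof
    show "f ` L \<subseteq> {a *s f u + b *s f v | a b. True}" using fl Ld by blast
    show "{a *s f u + b *s f v | a b. True} \<subseteq> f ` L"
    proof
      fix z assume "z \<in> {a *s f u + b *s f v | a b. True}"
      then obtain a b where "z = a *s f u + b *s f v" by blast
      hence "z = f (a *s u + b *s v)" using fl by simp
      moreover have "a *s u + b *s v \<in> L" using Ld by blast
      ultimately show "z \<in> f ` L" by blast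
    qed
  qed
  moreover have "\<forall>a b. a *s f u + b *s f v = 0 \<longrightarrow> a = 0 \<and> b = 0"
  proof (intro allI impI)
    fix a b assume "a *s f u + b *s f v = 0"
    hence "f (a *s u + b *s v) = f 0" using fl klin_0[OF k] by simp
    hence "a *s u + b *s v = 0" using Aut_inj[OF f] by (simp add: inj_eq)
    thus "a = 0 \<and> b = 0" using ind by blast
  qed
  ultimately show ?thesis unfolding is_line_def by blast
qed

lemma Aut_meets:
  assumes f: "f \<in> Aut sm" and M: "meets sm L X" shows "meets sm (f ` L) (f ` X)"
proof -
  obtain P where "is_point sm P" "P \<subseteq> L" "P \<subseteq> X" using M unfolding meets_def by blast
  hence "is_point sm (f ` P)" "f ` P \<subseteq> f ` L" "f ` P \<subseteq> f ` X" using Aut_point[OF f] by blast+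
  thus ?thesis unfolding meets_def by blast
qed

lemma Aut_G:
  assumes f: "f \<in> Aut sm" and G: "X \<in> Gr sm" shows "f ` X \<in> Gr sm"
proof -
  have X: "subsp X" using G by (rule G_subsp)
  obtain Y g where Y: "subsp Y" and D: "distant X Y" and kg: "klin g" and ig: "inj_on g X"
    and gX: "g ` X = Y" using G_elim[OF G] by blast
  have k: "klin f" using f by (rule Aut_klin)
  have kfi: "klin (inv f)" using Aut_klin[OF Aut_inv[OF f]] .
  define h where "h = f \<circ> g \<circ> inv f"
  have kh: "klin h" unfolding h_def using klin_comp k kg kfi by blast
  have hf: "h (f x) = f (g x)" for x unfolding h_def using Aut_inj[OF f] by simp
  have "inj_on h (f ` X)"
  proof (rule inj_onI)
    fix a b assume ab: "a \<in> f ` X" "b \<in> f ` X" "h a = h b"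
    then obtain x y where xy: "x \<in> X" "y \<in> X" "a = f x" "b = f y" by blast
    hence "f (g x) = f (g y)" using hf ab(3) by metis
    hence "g x = g y" using Aut_inj[OF f] by (simp add: inj_eq)
    hence "x = y" using ig xy by (simp add: inj_on_eq_iff)
    thus "a = b" using xy by simp
  qed
  moreover have "h ` (f ` X) = f ` Y"
  proof -
    have "h ` (f ` X) = (\<lambda>x. h (f x)) ` X" by (simp add: image_image)
    also have "\<dots> = (\<lambda>x. f (g x)) ` X" using hf by simp
    also have "\<dots> = f ` (g ` X)" by (simp add: image_image)
    finally show ?thesis using gX by simp
  qed
  moreover have "distant (f ` X) (f ` Y)" using Aut_distant[OF f D X Y] .
  moreover have "subsp (f ` X)" using Aut_subsp[OF f X] .
  moreover have "subsp (f ` Y)" using Aut_subsp[OF f Y] .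
  ultimately show ?thesis using G_intro[of "f ` X" "f ` Y" h] klin_lin_on[OF kh] by simp
qed

lemma G_im: assumes f: "f \<in> Aut sm" and R: "R \<subseteq> Gr sm" shows "im f R \<subseteq> Gr sm"
proof
  fix Y assume "Y \<in> im f R"
  then obtain X where X: "X \<in> R" "Y = f ` X" by (rule imageE)
  thus "Y \<in> Gr sm" using Aut_G[OF f] R by blast
qed

lemma R1_im:
  assumes f: "f \<in> Aut sm" and RG: "R \<subseteq> Gr sm" and R: "R1 sm R" shows "R1 sm (im f R)"
proof -
  have ie: "f ` X = f ` Y \<longleftrightarrow> X = Y" for X Y using Aut_inj[OF f] by (simp add: inj_image_eq_iff)
  have P1: "\<forall>X'\<in>im f R. \<forall>Y'\<in>im f R. X' \<noteq> Y' \<longrightarrow> distant X' Y'"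
  proof (intro ballI impI)
    fix X' Y' assume a: "X' \<in> im f R" "Y' \<in> im f R" "X' \<noteq> Y'"
    obtain X where X: "X \<in> R" "X' = f ` X" using a(1) by (rule imageE)
    obtain Y where Y: "Y \<in> R" "Y' = f ` Y" using a(2) by (rule imageE)
    have "X \<noteq> Y" using a(3) X Y by metis
    hence "distant X Y" using R X Y unfolding R1_def by blast
    moreover have "subsp X" "subsp Y" using X Y RG G_subsp by blast+
    ultimately have "distant (f ` X) (f ` Y)" using Aut_distant[OF f] by blast
    thus "distant X' Y'" using X Y by simp
  qed
  obtain A B C where abc: "A \<in> R" "B \<in> R" "C \<in> R" "A \<noteq> B" "A \<noteq> C" "B \<noteq> C"
    using R unfolding R1_def by blast
  have P2: "f ` A \<in> im f R" "f ` B \<in> im f R" "f ` C \<in> im f R" using abc by simp_all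
  have P3: "f ` A \<noteq> f ` B" "f ` A \<noteq> f ` C" "f ` B \<noteq> f ` C" using abc by (simp_all add: ie)
  show ?thesis unfolding R1_def
    apply (rule conjI[OF P1])
    apply (rule exI[of _ "f ` A"], rule exI[of _ "f ` B"], rule exI[of _ "f ` C"])
    using P2 P3 by simp
qed

lemma R2_im:
  assumes f: "f \<in> Aut sm" and R: "R2 sm R" shows "R2 sm (im f R)"
  unfolding R2_def
proof (intro allI impI ballI)
  fix L A' B' C' X' assume L: "is_line sm L" and ABC: "A' \<in> im f R" "B' \<in> im f R" "C' \<in> im f R"
    and m: "A' \<noteq> B' \<and> A' \<noteq> C' \<and> B' \<noteq> C' \<and> meets sm L A' \<and> meets sm L B' \<and> meets sm L C'"
    and X': "X' \<in> im f R"
  obtain A where dA: "A \<in> R" "A' = f ` A" using ABC(1) by (rule imageE)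
  obtain B where dB: "B \<in> R" "B' = f ` B" using ABC(2) by (rule imageE)
  obtain C where dC: "C \<in> R" "C' = f ` C" using ABC(3) by (rule imageE)
  obtain X where dX: "X \<in> R" "X' = f ` X" using X' by (rule imageE)
  note d = dA(1) dB(1) dC(1) dX(1) dA(2) dB(2) dC(2) dX(2)
  have g: "inv f \<in> Aut sm" using Aut_inv[OF f] .
  let ?L = "inv f ` L"
  have L0: "is_line sm ?L" using Aut_line[OF g L] .
  have "meets sm ?L (inv f ` A')" "meets sm ?L (inv f ` B')" "meets sm ?L (inv f ` C')"
    using m Aut_meets[OF g] by simp_all
  hence mm: "meets sm ?L A" "meets sm ?L B" "meets sm ?L C" using d Aut_inv_im[OF f] by simp_all
  have "A \<noteq> B" "A \<noteq> C" "B \<noteq> C" using m d by metis+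
  hence "meets sm ?L X" using R L0 mm d(1-4) unfolding R2_def by blast
  hence "meets sm (f ` ?L) (f ` X)" using Aut_meets[OF f] by simp
  thus "meets sm L X'" using d Aut_im_inv[OF f] by simp
qed

lemma Zreg_im:
  assumes f: "f \<in> Aut sm" and Z: "Z_regulus sm R" shows "Z_regulus sm (im f R)"
proof -
  have RG: "R \<subseteq> Gr sm" and R1: "R1 sm R" and R2: "R2 sm R"
    and max: "\<not> (\<exists>S. R \<subset> S \<and> S \<subseteq> Gr sm \<and> R1 sm S \<and> R2 sm S)"
    using Z unfolding Z_regulus_def by simp_all
  have g: "inv f \<in> Aut sm" using Aut_inv[OF f] .
  have "\<not> (\<exists>S. im f R \<subset> S \<and> S \<subseteq> Gr sm \<and> R1 sm S \<and> R2 sm S)"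
  proof
    assume "\<exists>S. im f R \<subset> S \<and> S \<subseteq> Gr sm \<and> R1 sm S \<and> R2 sm S"
    then obtain S where S: "im f R \<subset> S" "S \<subseteq> Gr sm" "R1 sm S" "R2 sm S" by (elim exE conjE)
    have "im (inv f) (im f R) \<subseteq> im (inv f) S" using S(1) by (intro image_mono) blast
    hence sub: "R \<subseteq> im (inv f) S" using Aut_inv_im_im[OF f] by simp
    have "R \<noteq> im (inv f) S"
    proof
      assume "R = im (inv f) S"
      hence "im f R = S" using Aut_im_inv_im[OF f] by simp
      thus False using S(1) by blast
    qed
    hence "R \<subset> im (inv f) S" using sub by blast
    moreover have "im (inv f) S \<subseteq> Gr sm" using G_im[OF g S(2)] .
    moreover have "R1 sm (im (inv f) S)" using R1_im[OF g S(2) S(3)] .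
    moreover have "R2 sm (im (inv f) S)" using R2_im[OF g S(4)] .
    ultimately have "\<exists>S. R \<subset> S \<and> S \<subseteq> Gr sm \<and> R1 sm S \<and> R2 sm S" by (intro exI[of _ "im (inv f) S"]) simp
    thus False using max by simp
  qed
  thus ?thesis unfolding Z_regulus_def using G_im[OF f RG] R1_im[OF f RG R1] R2_im[OF f R2] by simp
qed

end


locale triple = LV +
  fixes A B :: "'b set" and phi pA :: "'b \<Rightarrow> 'b"
  assumes A: "subspace sm A" and B: "subspace sm B" and AB: "distant A B"
    and kphi: "klinear sm phi" and iphi: "inj_on phi A" and phiA: "phi ` A = B"
    and kpA: "klinear sm pA" and pA: "\<forall>v. pA v \<in> A \<and> v - pA v \<in> B"
begin

definition Xl :: "'a \<Rightarrow> 'b set" where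
  "Xl l = {a + l *s phi a | a. a \<in> A}"

definition cent :: "'a \<Rightarrow> bool" where
  "cent l \<longleftrightarrow> (\<forall>m. m * l = l * m)"

definition Rstd :: "'b set set" where
  "Rstd = insert B {Xl l | l. cent l}"

lemma phiB: "a \<in> A \<Longrightarrow> phi a \<in> B"
  using phiA by blast
lemma phi_sm: "phi (k *s a) = k *s phi a"
  by (rule klin_sm[OF kphi])
lemma phi_add: "phi (a + b) = phi a + phi b"
  by (rule klin_add[OF kphi])
lemma phi_diff: "phi (a - b) = phi a - phi b"
  by (rule klin_diff[OF kphi])
lemma phi_0: "phi 0 = 0"
  by (rule klin_0[OF kphi])
lemma phi_eq: "a \<in> A \<Longrightarrow> a' \<in> A \<Longrightarrow> phi a = phi a' \<Longrightarrow> a = a'"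
  using iphi by (simp add: inj_on_eq_iff)
lemma phi_zero: "a \<in> A \<Longrightarrow> phi a = 0 \<Longrightarrow> a = 0"
  using phi_eq[of a 0] phi_0 subsp_0[OF A] by simp

lemma AB_unique: "x1 \<in> A \<Longrightarrow> x2 \<in> A \<Longrightarrow> y1 \<in> B \<Longrightarrow> y2 \<in> B \<Longrightarrow> x1 + y1 = x2 + y2 \<Longrightarrow> x1 = x2 \<and> y1 = y2"
  using distant_unique[OF AB A B] by blast

lemma AB_Int: "x \<in> A \<Longrightarrow> x \<in> B \<Longrightarrow> x = 0"
  using distant_Int[OF AB] by blast

lemma pA_char: "a \<in> A \<Longrightarrow> v - a \<in> B \<Longrightarrow> pA v = a"
proof -
  assume a: "a \<in> A" "v - a \<in> B"
  have "pA v + (v - pA v) = a + (v - a)" by simp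
  thus ?thesis using AB_unique[of "pA v" a "v - pA v" "v - a"] a pA by blast
qed

lemma cent_comm: "cent l \<Longrightarrow> l * c = c * l"
  unfolding cent_def by simp
lemma cent_0: "cent 0" unfolding cent_def by simp
lemma cent_1: "cent 1" unfolding cent_def by simp

lemma Xl_mem: "a \<in> A \<Longrightarrow> a + l *s phi a \<in> Xl l"
  unfolding Xl_def by blast

lemma Xl_E: "x \<in> Xl l \<Longrightarrow> (\<And>a. a \<in> A \<Longrightarrow> x = a + l *s phi a \<Longrightarrow> P) \<Longrightarrow> P"
  unfolding Xl_def by blast

lemma Xl_0: "Xl 0 = A"
  unfolding Xl_def by auto

lemma Xl_subsp: assumes c: "cent l" shows "subsp (Xl l)"
proof (rule subsp_I)
  show "0 \<in> Xl l" using Xl_mem[OF subsp_0[OF A], of l] phi_0 by simp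
next
  fix x y assume "x \<in> Xl l" "y \<in> Xl l"
  then obtain a b where ab: "a \<in> A" "b \<in> A" "x = a + l *s phi a" "y = b + l *s phi b"
    by (metis Xl_E)
  have "x + y = (a + b) + l *s phi (a + b)" using ab by (simp add: phi_add sm_add_right algebra_simps)
  thus "x + y \<in> Xl l" using Xl_mem subsp_add[OF A ab(1,2)] by simp
next
  fix c x assume "x \<in> Xl l"
  then obtain a where a: "a \<in> A" "x = a + l *s phi a" by (metis Xl_E)
  have "c *s x = c *s a + (c * l) *s phi a" using a by (simp add: sm_add_right sm_assoc)
  also have "\<dots> = c *s a + l *s phi (c *s a)"
    by (simp add: phi_sm sm_assoc[symmetric] cent_comm[OF c])
  finally show "c *s x \<in> Xl l" using Xl_mem subsp_sm[OF A a(1)] by simp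
qed

lemma pA_Xl: "a \<in> A \<Longrightarrow> pA (a + l *s phi a) = a"
  by (rule pA_char) (simp_all add: phiB subsp_sm[OF B])

lemma B_Xl_distant: assumes c: "cent l" shows "distant B (Xl l)"
proof (rule distant_I)
  show "subsp B" by (rule B)
  show "subsp (Xl l)" by (rule Xl_subsp[OF c])
  fix v assume v: "v \<in> B" "v \<in> Xl l"
  then obtain a where a: "a \<in> A" "v = a + l *s phi a" by (metis Xl_E)
  have "a = v - l *s phi a" using a by simp
  hence "a \<in> B" using v(1) subsp_diff[OF B] subsp_sm[OF B] phiB[OF a(1)] by metis
  hence "a = 0" using AB_Int a(1) by blast
  thus "v = 0" using a phi_0 by simp
next
  fix v
  let ?x = "pA v"
  have x: "?x \<in> A" "v - ?x \<in> B" using pA by blast+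
  have "v = ((v - ?x) - l *s phi ?x) + (?x + l *s phi ?x)" by simp
  moreover have "(v - ?x) - l *s phi ?x \<in> B" using x subsp_diff[OF B] subsp_sm[OF B] phiB by blast
  moreover have "?x + l *s phi ?x \<in> Xl l" using Xl_mem x by blast
  ultimately show "\<exists>x y. x \<in> B \<and> y \<in> Xl l \<and> v = x + y" by blast
qed

lemma Xl_distant:
  assumes cl: "cent l" and cm: "cent m" and lm: "l \<noteq> m"
  shows "distant (Xl l) (Xl m)"
proof (rule distant_I)
  show "subsp (Xl l)" "subsp (Xl m)" using Xl_subsp cl cm by blast+
  fix v assume v: "v \<in> Xl l" "v \<in> Xl m"
  obtain a where a: "a \<in> A" "v = a + l *s phi a" using v(1) by (metis Xl_E)
  obtain b where b: "b \<in> A" "v = b + m *s phi b" using v(2) by (metis Xl_E)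
  have "a = b \<and> l *s phi a = m *s phi b"
    using AB_unique[OF a(1) b(1)] a(2) b(2) phiB a(1) b(1) subsp_sm[OF B] by metis
  hence e: "l *s phi a = m *s phi a" by metis
  have "(l - m) *s phi a = 0" by (simp add: sm_diff_left e)
  hence "phi a = 0" using lm by simp
  hence "a = 0" using phi_zero a(1) by blast
  thus "v = 0" using a phi_0 by simp
next
  fix v
  let ?x = "pA v"
  have x: "?x \<in> A" "v - ?x \<in> B" using pA by blast+
  obtain z where z: "z \<in> A" "v - ?x = phi z" using x(2) phiA by blast
  define a where "a = inverse (l - m) *s (z - m *s ?x)"
  define a' where "a' = ?x - a"
  have aA: "a \<in> A" unfolding a_def using z x subsp_sm[OF A] subsp_diff[OF A] by blast
  have a'A: "a' \<in> A" unfolding a'_def using aA x subsp_diff[OF A] by blast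
  have lm0: "l - m \<noteq> 0" using lm by simp
  have "(l - m) *s a = z - m *s ?x" unfolding a_def using sm_inv2[OF lm0] by simp
  hence "l *s a + m *s a' = z" unfolding a'_def by (simp add: sm_diff_left sm_diff_right algebra_simps)
  hence "l *s phi a + m *s phi a' = phi z" by (metis phi_add phi_sm)
  hence "v = (a + l *s phi a) + (a' + m *s phi a')" using z unfolding a'_def
    by (metis (no_types, lifting) add.commute add.left_commute diff_add_cancel)
  moreover have "a + l *s phi a \<in> Xl l" "a' + m *s phi a' \<in> Xl m" using Xl_mem aA a'A by blast+
  ultimately show "\<exists>x y. x \<in> Xl l \<and> y \<in> Xl m \<and> v = x + y" by blast
qed

lemma Xl_G: assumes c: "cent l" shows "Xl l \<in> Gr sm"
proof -
  have lin: "lin_on (Xl l) (phi \<circ> pA)" by (rule klin_lin_on[OF klin_comp[OF kphi kpA]])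
  have "inj_on (phi \<circ> pA) (Xl l)"
  proof (rule inj_onI)
    fix x y assume xy: "x \<in> Xl l" "y \<in> Xl l" "(phi \<circ> pA) x = (phi \<circ> pA) y"
    obtain a where a: "a \<in> A" "x = a + l *s phi a" using xy(1) by (metis Xl_E)
    obtain b where b: "b \<in> A" "y = b + l *s phi b" using xy(2) by (metis Xl_E)
    have "phi a = phi b" using xy(3) a b pA_Xl by simp
    hence "a = b" using phi_eq a b by blast
    thus "x = y" using a b by simp
  qed
  moreover have "(phi \<circ> pA) ` Xl l = B"
  proof
    show "(phi \<circ> pA) ` Xl l \<subseteq> B"
    proof
      fix z assume "z \<in> (phi \<circ> pA) ` Xl l"
      then obtain x where x: "x \<in> Xl l" "z = phi (pA x)" by auto
      thus "z \<in> B" using pA phiB by blast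
    qed
    show "B \<subseteq> (phi \<circ> pA) ` Xl l"
    proof
      fix z assume "z \<in> B"
      then obtain a where a: "a \<in> A" "z = phi a" using phiA by blast
      hence "z = (phi \<circ> pA) (a + l *s phi a)" using pA_Xl by simp
      thus "z \<in> (phi \<circ> pA) ` Xl l" using Xl_mem[OF a(1)] by blast
    qed
  qed
  moreover have "distant (Xl l) B" using distant_sym[OF B_Xl_distant[OF c]] .
  ultimately show ?thesis using G_intro[OF Xl_subsp[OF c] B _ lin] by blast
qed

end


context LV begin

lemma indep3:
  assumes P: "\<forall>a b c. a *s u + b *s v + c *s w = 0 \<longrightarrow> a = 0 \<and> b = 0 \<and> c = 0"
  shows "indep {u, v, w} \<and> card {u, v, w} = 3"
proof -
  have uv: "u \<noteq> v"
  proof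
    assume "u = v"
    hence "1 *s u + (-1) *s v + 0 *s w = 0" by simp
    thus False using P by fastforce
  qed
  have uw: "u \<noteq> w"
  proof
    assume "u = w"
    hence "1 *s u + 0 *s v + (-1) *s w = 0" by simp
    thus False using P by fastforce
  qed
  have vw: "v \<noteq> w"
  proof
    assume "v = w"
    hence "0 *s u + 1 *s v + (-1) *s w = 0" by simp
    thus False using P by fastforce
  qed
  have "indep {u, v, w}"
    unfolding indep_def
  proof
    fix x assume x: "x \<in> {u, v, w}"
    show "x \<notin> span ({u, v, w} - {x})"
    proof
      assume xs: "x \<in> span ({u, v, w} - {x})"
      consider "x = u" | "x = v" | "x = w" using x by blast
      thus False
      proof cases
        case 1
        hence "{u, v, w} - {x} = {v, w}" using uv uw by auto
        then obtain b c where "u = b *s v + c *s w" using xs 1 span_pair by auto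
        hence "1 *s u + (- b) *s v + (- c) *s w = 0" by (simp add: sm_minus_left)
        thus False using P by fastforce
      next
        case 2
        hence "{u, v, w} - {x} = {u, w}" using uv vw by auto
        then obtain b c where "v = b *s u + c *s w" using xs 2 span_pair by auto
        hence "(- b) *s u + 1 *s v + (- c) *s w = 0" by (simp add: sm_minus_left algebra_simps)
        thus False using P by fastforce
      next
        case 3
        hence "{u, v, w} - {x} = {u, v}" using uw vw by auto
        then obtain b c where "w = b *s u + c *s v" using xs 3 span_pair by auto
        hence "(- b) *s u + (- c) *s v + 1 *s w = 0" by (simp add: sm_minus_left algebra_simps)
        thus False using P by fastforce
      qed
    qed
  qed
  moreover have "card {u, v, w} = 3" using uv uw vw by simp
  ultimately show ?thesis by blast
qed

lemma line_span_uv: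
  assumes "is_line sm L" shows "\<exists>u v. L = span {u, v}"
  using assms unfolding is_line_def by (auto simp: span_pair)

lemma line_subsp: "is_line sm L \<Longrightarrow> subsp L"
  using line_span_uv subsp_span by metis

lemma line_span:
  assumes L: "is_line sm L" and p: "p \<in> L" "p \<noteq> 0" and q: "q \<in> L" "q \<notin> span {p}"
  shows "L = span {p, q}"
proof -
  obtain u v where Luv: "L = span {u, v}" using line_span_uv[OF L] by blast
  have "\<exists>r. L = span (insert r {p})"
  proof (cases "p \<in> span {v}")
    case False
    have "p \<in> span (insert u {v})" using p Luv by simp
    hence "span (insert p {v}) = span (insert u {v})" using span_exchange_eq False by blast
    hence "L = span (insert v {p})" using Luv by (simp add: insert_commute)
    thus ?thesis by blast
  next
    case True
    then obtain b where b: "p = b *s v" using span_singleton by blast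
    hence "b \<noteq> 0" using p(2) by auto
    hence "v = inverse b *s p" using b sm_inv by simp
    hence "v \<in> span (insert u {p})" by (metis span_sm span_base insertCI)
    hence e1: "span (insert v (insert u {p})) = span (insert u {p})" by (rule span_insert_eq)
    have "p \<in> span (insert u {v})" using True span_mono[of "{v}" "insert u {v}"] by blast
    hence e2: "span (insert p (insert u {v})) = span (insert u {v})" by (rule span_insert_eq)
    have "insert v (insert u {p}) = insert p (insert u {v})" by blast
    hence "L = span (insert u {p})" using e1 e2 Luv by simp
    thus ?thesis by blast
  qed
  then obtain r where r: "L = span (insert r {p})" by blast
  have "q \<in> span (insert r {p})" using q r by simp
  hence "span (insert q {p}) = span (insert r {p})" using span_exchange_eq q(2) by blast
  thus ?thesis using r by (simp add: insert_commute)
qed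

lemma meets_I: "subsp L \<Longrightarrow> subsp M \<Longrightarrow> p \<noteq> 0 \<Longrightarrow> p \<in> L \<Longrightarrow> p \<in> M \<Longrightarrow> meets sm L M"
  unfolding meets_def is_point_def by (intro exI[of _ "range (\<lambda>c. c *s p)"]) (auto simp: subsp_sm)

lemma meets_E: "meets sm L M \<Longrightarrow> \<exists>p. p \<noteq> 0 \<and> p \<in> L \<and> p \<in> M"
proof -
  assume "meets sm L M"
  then obtain P v where "v \<noteq> 0" "P = range (\<lambda>c. c *s v)" "P \<subseteq> L" "P \<subseteq> M"
    unfolding meets_def is_point_def by blast
  moreover have "v = 1 *s v" by simp
  ultimately show ?thesis by (metis rangeI subsetD)
qed

end

context triple begin

lemma dimA:
  assumes dim: "dim_gt_2 sm"
  shows "\<exists>a'\<in>A. a' \<notin> span {a}"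
proof (rule ccontr)
  assume "\<not> (\<exists>a'\<in>A. a' \<notin> span {a})"
  hence As: "A \<subseteq> span {a}" by blast
  have "B \<subseteq> span {phi a}"
  proof -
    have "B = phi ` A" using phiA by simp
    also have "\<dots> \<subseteq> phi ` span {a}" using As by blast
    also have "\<dots> = span {phi a}" using klin_image_span[OF kphi, of "{a}"] by simp
    finally show ?thesis .
  qed
  have U: "UNIV \<subseteq> span {a, phi a}"
  proof
    fix z
    obtain x y where xy: "x \<in> A" "y \<in> B" "z = x + y" using distant_decomp[OF AB] by blast
    have "x \<in> span {a, phi a}" using xy As span_mono[of "{a}" "{a, phi a}"] by blast
    moreover have "y \<in> span {a, phi a}" using xy \<open>B \<subseteq> span {phi a}\<close> span_mono[of "{phi a}" "{a, phi a}"] by blast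
    ultimately show "z \<in> span {a, phi a}" using xy span_add by blast
  qed
  obtain u v w where P: "\<forall>a b c. a *s u + b *s v + c *s w = 0 \<longrightarrow> a = 0 \<and> b = 0 \<and> c = 0"
    using dim unfolding dim_gt_2_def by blast
  have I: "indep {u, v, w}" "card {u, v, w} = 3" using indep3[OF P] by blast+
  have "finite {u, v, w} \<and> card {u, v, w} \<le> card {a, phi a}"
    using steinitz[of "{a, phi a}" "{u, v, w}"] I U by blast
  moreover have "card {a, phi a} \<le> 2" by (simp add: card_insert_le_m1)
  ultimately show False using I by simp
qed

definition good :: "'b set \<Rightarrow> bool" where
  "good L \<longleftrightarrow> (\<exists>a. a \<in> A \<and> a \<noteq> 0 \<and> a \<in> L \<and> phi a \<in> L)"

lemma phi_nz: "a \<in> A \<Longrightarrow> a \<noteq> 0 \<Longrightarrow> phi a \<noteq> 0"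
  using phi_zero by blast

lemma Xl_nz: "a \<in> A \<Longrightarrow> a \<noteq> 0 \<Longrightarrow> a + l *s phi a \<noteq> 0"
proof
  assume a: "a \<in> A" "a \<noteq> 0" "a + l *s phi a = 0"
  have "a + l *s phi a = 0 + 0" using a by simp
  hence "a = 0" using AB_unique[of a 0 "l *s phi a" 0] a subsp_0[OF A] subsp_0[OF B] phiB subsp_sm[OF B] by blast
  thus False using a by simp
qed

lemma good_meets:
  assumes L: "is_line sm L" and g: "good L" and M: "M \<in> Rstd"
  shows "meets sm L M"
proof -
  obtain a where a: "a \<in> A" "a \<noteq> 0" "a \<in> L" "phi a \<in> L" using g unfolding good_def by blast
  have sL: "subsp L" using line_subsp[OF L] .
  consider "M = B" | l where "cent l" "M = Xl l" using M unfolding Rstd_def by blast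
  thus ?thesis
  proof cases
    case 1
    thus ?thesis using meets_I[OF sL B phi_nz[OF a(1,2)] a(4)] phiB[OF a(1)] by simp
  next
    case 2
    have "a + l *s phi a \<in> L" using a sL subsp_add subsp_sm by blast
    thus ?thesis using meets_I[OF sL Xl_subsp[OF 2(1)] Xl_nz[OF a(1,2)]] Xl_mem[OF a(1)] 2 by simp
  qed
qed

lemma meets_Xl:
  assumes "meets sm L (Xl l)"
  shows "\<exists>a. a \<in> A \<and> a \<noteq> 0 \<and> a + l *s phi a \<in> L"
proof -
  obtain p where p: "p \<noteq> 0" "p \<in> L" "p \<in> Xl l" using meets_E[OF assms] by blast
  obtain a where a: "a \<in> A" "p = a + l *s phi a" using p(3) by (metis Xl_E)
  have "a \<noteq> 0" using p a phi_0 by auto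
  thus ?thesis using a p by blast
qed

lemma meets_B:
  assumes "meets sm L B"
  shows "\<exists>c. c \<in> A \<and> c \<noteq> 0 \<and> phi c \<in> L"
proof -
  obtain p where p: "p \<noteq> 0" "p \<in> L" "p \<in> B" using meets_E[OF assms] by blast
  obtain c where c: "c \<in> A" "p = phi c" using p(3) phiA by blast
  have "c \<noteq> 0" using p c phi_0 by auto
  thus ?thesis using c p by blast
qed

lemma case1:
  assumes L: "is_line sm L" and cl: "cent l" and cm: "cent m" and lm: "l \<noteq> m"
    and mB: "meets sm L B" and ml: "meets sm L (Xl l)" and mm: "meets sm L (Xl m)"
  shows "good L"
proof -
  have sL: "subsp L" using line_subsp[OF L] .
  obtain c where c: "c \<in> A" "c \<noteq> 0" "phi c \<in> L" using meets_B[OF mB] by blast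
  obtain a where a: "a \<in> A" "a \<noteq> 0" "a + l *s phi a \<in> L" using meets_Xl[OF ml] by blast
  obtain a' where a': "a' \<in> A" "a' \<noteq> 0" "a' + m *s phi a' \<in> L" using meets_Xl[OF mm] by blast
  have ns: "a + l *s phi a \<notin> span {phi c}"
  proof
    assume "a + l *s phi a \<in> span {phi c}"
    then obtain t where "a + l *s phi a = t *s phi c" using span_singleton by blast
    hence "a + l *s phi a = 0 + t *s phi c" by simp
    hence "a = 0" using AB_unique[of a 0 "l *s phi a" "t *s phi c"] a(1) c(1) subsp_0[OF A] phiB subsp_sm[OF B]
      by blast
    thus False using a by simp
  qed
  have Ls: "L = span {phi c, a + l *s phi a}"
    using line_span[OF L c(3) phi_nz[OF c(1,2)] a(3) ns] .
  then obtain r s where rs: "a' + m *s phi a' = r *s phi c + s *s (a + l *s phi a)"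
    using a'(3) span_pair by auto
  hence "a' + m *s phi a' = s *s a + (r *s phi c + (s * l) *s phi a)"
    by (simp add: sm_add_right sm_assoc algebra_simps)
  hence e: "a' = s *s a \<and> m *s phi a' = r *s phi c + (s * l) *s phi a"
    using AB_unique[of a' "s *s a" "m *s phi a'" "r *s phi c + (s * l) *s phi a"]
      a'(1) a(1) c(1) phiB subsp_sm[OF A] subsp_sm[OF B] subsp_add[OF B] by metis
  have s0: "s \<noteq> 0" using e a'(2) by auto
  have e1: "a' = s *s a" and e2: "m *s phi a' = r *s phi c + (s * l) *s phi a" using e by blast+
  have "m *s phi a' = (m * s) *s phi a" using e1 by (simp add: phi_sm sm_assoc)
  hence "(m * s) *s phi a = r *s phi c + (s * l) *s phi a" using e2 by simp
  hence "(m * s) *s phi a = r *s phi c + (l * s) *s phi a" using cent_comm[OF cl, of s] by simp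
  hence "((m - l) * s) *s phi a = r *s phi c" by (simp add: sm_diff_left left_diff_distrib algebra_simps)
  moreover have k0: "(m - l) * s \<noteq> 0" using s0 lm by simp
  ultimately have "phi a = inverse ((m - l) * s) *s (r *s phi c)" by (metis sm_inv)
  hence pL: "phi a \<in> L" using c(3) sL subsp_sm by metis
  have "a = (a + l *s phi a) - l *s phi a" by simp
  hence "a \<in> L" using a(3) pL sL subsp_diff subsp_sm by metis
  thus ?thesis unfolding good_def using a pL by blast
qed

end


lemma ag1: "(x::'a::ab_group_add) + z = y + w \<Longrightarrow> x - y = w - z"
  by (simp add: algebra_simps)

context triple begin

lemma case2:
  assumes L: "is_line sm L" and cl: "cent l" and cm: "cent m" and cn: "cent n"
    and lm: "l \<noteq> m" and ln: "l \<noteq> n" and mn: "m \<noteq> n"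
    and ml: "meets sm L (Xl l)" and mm: "meets sm L (Xl m)" and mnn: "meets sm L (Xl n)"
  shows "good L"
proof -
  have sL: "subsp L" using line_subsp[OF L] .
  obtain a where a: "a \<in> A" "a \<noteq> 0" "a + l *s phi a \<in> L" using meets_Xl[OF ml] by blast
  obtain a' where a': "a' \<in> A" "a' \<noteq> 0" "a' + m *s phi a' \<in> L" using meets_Xl[OF mm] by blast
  obtain a'' where a'': "a'' \<in> A" "a'' \<noteq> 0" "a'' + n *s phi a'' \<in> L" using meets_Xl[OF mnn] by blast
  have phiBs: "\<And>x k. x \<in> A \<Longrightarrow> k *s phi x \<in> B" using phiB subsp_sm[OF B] by blast
  have sa: "a' \<in> span {a}"
  proof (rule ccontr)
    assume na: "a' \<notin> span {a}"
    have ns: "a' + m *s phi a' \<notin> span {a + l *s phi a}"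
    proof
      assume "a' + m *s phi a' \<in> span {a + l *s phi a}"
      then obtain t where "a' + m *s phi a' = t *s (a + l *s phi a)" using span_singleton by blast
      hence "a' + m *s phi a' = t *s a + (t * l) *s phi a" by (simp add: sm_add_right sm_assoc)
      hence "a' = t *s a"
        using AB_unique[of a' "t *s a" "m *s phi a'" "(t * l) *s phi a"] a a' phiBs subsp_sm[OF A] by blast
      thus False using na span_singleton by blast
    qed
    have Ls: "L = span {a + l *s phi a, a' + m *s phi a'}"
      using line_span[OF L a(3) Xl_nz[OF a(1,2)] a'(3) ns] .
    then obtain r s where rs: "a'' + n *s phi a'' = r *s (a + l *s phi a) + s *s (a' + m *s phi a')"
      using a''(3) span_pair by auto
    hence "a'' + n *s phi a'' = (r *s a + s *s a') + ((r * l) *s phi a + (s * m) *s phi a')"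
      by (simp add: sm_add_right sm_assoc algebra_simps)
    moreover have "r *s a + s *s a' \<in> A" using a a' subsp_add[OF A] subsp_sm[OF A] by blast
    moreover have "(r * l) *s phi a + (s * m) *s phi a' \<in> B" using a a' phiBs subsp_add[OF B] by blast
    ultimately have e: "a'' = r *s a + s *s a' \<and> n *s phi a'' = (r * l) *s phi a + (s * m) *s phi a'"
      using AB_unique[of a'' "r *s a + s *s a'" "n *s phi a''"] a''(1) phiBs by blast
    have e1: "a'' = r *s a + s *s a'" and e2: "n *s phi a'' = (r * l) *s phi a + (s * m) *s phi a'"
      using e by blast+
    have "phi (n *s a'') = n *s phi a''" by (rule phi_sm)
    also have "\<dots> = (r * l) *s phi a + (s * m) *s phi a'" by (rule e2)
    also have "\<dots> = phi ((r * l) *s a + (s * m) *s a')" by (simp add: phi_sm phi_add)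
    finally have "phi (n *s a'') = phi ((r * l) *s a + (s * m) *s a')" .
    moreover have "n *s a'' \<in> A" "(r * l) *s a + (s * m) *s a' \<in> A"
      using a a' a'' subsp_add[OF A] subsp_sm[OF A] by blast+
    ultimately have "n *s a'' = (r * l) *s a + (s * m) *s a'" using phi_eq by blast
    hence H: "(n * r) *s a + (n * s) *s a' = (r * l) *s a + (s * m) *s a'"
      using e1 by (simp add: sm_add_right sm_assoc)
    have "(n * r) *s a - (r * l) *s a = (s * m) *s a' - (n * s) *s a'" using ag1[OF H] .
    moreover have "((n - l) * r) *s a = (n * r) *s a - (r * l) *s a"
      by (simp add: left_diff_distrib sm_diff_left cent_comm[OF cl])
    moreover have "((m - n) * s) *s a' = (s * m) *s a' - (n * s) *s a'"
      by (simp add: left_diff_distrib sm_diff_left cent_comm[OF cm])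
    ultimately have K: "((n - l) * r) *s a = ((m - n) * s) *s a'" by simp
    show False
    proof (cases "s = 0")
      case True
      hence "((n - l) * r) *s a = 0" using K by simp
      hence "(n - l) * r = 0" using a(2) by simp
      hence "r = 0" using ln by simp
      hence "a'' = 0" using e1 True by simp
      thus False using a'' by simp
    next
      case False
      have nz: "(m - n) * s \<noteq> 0" using False mn by simp
      have "a' = inverse ((m - n) * s) *s (((n - l) * r) *s a)" using K sm_inv[OF nz] by metis
      hence "a' = (inverse ((m - n) * s) * ((n - l) * r)) *s a" by (simp add: sm_assoc)
      hence "a' \<in> span {a}" using span_singleton by blast
      thus False using na by simp
    qed
  qed
  then obtain k where k: "a' = k *s a" using span_singleton by blast
  have k0: "k \<noteq> 0" using k a'(2) by auto
  have "a' + m *s phi a' = k *s a + (m * k) *s phi a" using k by (simp add: phi_sm sm_assoc)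
  also have "\<dots> = k *s (a + m *s phi a)" by (simp add: sm_add_right sm_assoc cent_comm[OF cm])
  finally have "a + m *s phi a = inverse k *s (a' + m *s phi a')" using sm_inv[OF k0] by metis
  hence q: "a + m *s phi a \<in> L" using a'(3) sL subsp_sm by metis
  have "(l - m) *s phi a = (a + l *s phi a) - (a + m *s phi a)" by (simp add: sm_diff_left)
  hence "(l - m) *s phi a \<in> L" using q a(3) sL subsp_diff by metis
  moreover have "l - m \<noteq> 0" using lm by simp
  ultimately have pL: "phi a \<in> L" using sL subsp_sm sm_inv by metis
  have "a = (a + l *s phi a) - l *s phi a" by simp
  hence "a \<in> L" using a(3) pL sL subsp_diff subsp_sm by metis
  thus ?thesis unfolding good_def using a pL by blast
qed

lemma Rstd_cases: "M \<in> Rstd \<Longrightarrow> M = B \<or> (\<exists>l. cent l \<and> M = Xl l)"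
  unfolding Rstd_def by blast

lemma R2_Rstd: "R2 sm Rstd"
  unfolding R2_def
proof (intro allI impI ballI)
  fix L M1 M2 M3 X
  assume L: "is_line sm L" and M: "M1 \<in> Rstd" "M2 \<in> Rstd" "M3 \<in> Rstd"
    and h: "M1 \<noteq> M2 \<and> M1 \<noteq> M3 \<and> M2 \<noteq> M3 \<and> meets sm L M1 \<and> meets sm L M2 \<and> meets sm L M3"
    and X: "X \<in> Rstd"
  have d: "M1 \<noteq> M2" "M1 \<noteq> M3" "M2 \<noteq> M3" and m: "meets sm L M1" "meets sm L M2" "meets sm L M3"
    using h by blast+
  have "good L"
  proof (cases "M1 = B")
    case True
    obtain l2 where l2: "cent l2" "M2 = Xl l2" using Rstd_cases[OF M(2)] d True by blast
    obtain l3 where l3: "cent l3" "M3 = Xl l3" using Rstd_cases[OF M(3)] d True by blast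
    have "l2 \<noteq> l3" using l2 l3 d by blast
    thus ?thesis using case1[OF L l2(1) l3(1)] m True l2 l3 by simp
  next
    case F1: False
    obtain l1 where l1: "cent l1" "M1 = Xl l1" using Rstd_cases[OF M(1)] F1 by blast
    show ?thesis
    proof (cases "M2 = B")
      case True
      obtain l3 where l3: "cent l3" "M3 = Xl l3" using Rstd_cases[OF M(3)] d True by blast
      have "l1 \<noteq> l3" using l1 l3 d by blast
      thus ?thesis using case1[OF L l1(1) l3(1)] m True l1 l3 by simp
    next
      case F2: False
      obtain l2 where l2: "cent l2" "M2 = Xl l2" using Rstd_cases[OF M(2)] F2 by blast
      show ?thesis
      proof (cases "M3 = B")
        case True
        have "l1 \<noteq> l2" using l1 l2 d by blast
        thus ?thesis using case1[OF L l1(1) l2(1)] m True l1 l2 by simp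
      next
        case False
        obtain l3 where l3: "cent l3" "M3 = Xl l3" using Rstd_cases[OF M(3)] False by blast
        have "l1 \<noteq> l2" "l1 \<noteq> l3" "l2 \<noteq> l3" using l1 l2 l3 d by blast+
        thus ?thesis using case2[OF L l1(1) l2(1) l3(1)] m l1 l2 l3 by simp
      qed
    qed
  qed
  thus "meets sm L X" using good_meets[OF L _ X] by blast
qed

end


context triple begin

lemma Rstd_B: "B \<in> Rstd" unfolding Rstd_def by simp
lemma Rstd_Xl: "cent l \<Longrightarrow> Xl l \<in> Rstd" unfolding Rstd_def by blast
lemma Rstd_A: "A \<in> Rstd" using Rstd_Xl[OF cent_0] Xl_0 by simp

lemma contain:
  assumes dim: "dim_gt_2 sm"
    and SG: "\<forall>X\<in>S. subsp X" and D: "\<forall>X\<in>S. \<forall>Y\<in>S. X \<noteq> Y \<longrightarrow> distant X Y" and R2S: "R2 sm S"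
    and AS: "A \<in> S" and BS: "B \<in> S" and CS: "Xl 1 \<in> S"
    and ne: "A \<noteq> B" "A \<noteq> Xl 1" "B \<noteq> Xl 1"
  shows "S \<subseteq> Rstd"
proof
  fix X assume XS: "X \<in> S"
  have R2': "\<And>L M1 M2 M3 Y. is_line sm L \<Longrightarrow> M1 \<in> S \<Longrightarrow> M2 \<in> S \<Longrightarrow> M3 \<in> S \<Longrightarrow>
      M1 \<noteq> M2 \<and> M1 \<noteq> M3 \<and> M2 \<noteq> M3 \<and> meets sm L M1 \<and> meets sm L M2 \<and> meets sm L M3 \<Longrightarrow>
      Y \<in> S \<Longrightarrow> meets sm L Y"
    using R2S unfolding R2_def by blast
  show "X \<in> Rstd"
  proof (cases "X = B \<or> X = A")
    case True thus ?thesis using Rstd_A Rstd_B by blast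
  next
    case False
    hence XnB: "X \<noteq> B" and XnA: "X \<noteq> A" by blast+
    have Xs: "subsp X" using SG XS by blast
    have XB: "distant X B" using D XS BS XnB by blast
    have phiBs: "\<And>x k. x \<in> A \<Longrightarrow> k *s phi x \<in> B" using phiB subsp_sm[OF B] by blast
    have step1: "\<exists>k. a + phi (k *s a) \<in> X" if a: "a \<in> A" "a \<noteq> 0" for a
    proof -
      let ?L = "span {a, phi a}"
      have pnz: "phi a \<noteq> 0" using phi_nz a by blast
      have "is_line sm ?L"
        unfolding is_line_def
      proof (intro exI conjI)
        show "\<forall>r s. r *s a + s *s phi a = 0 \<longrightarrow> r = 0 \<and> s = 0"
        proof (intro allI impI)
          fix r s assume "r *s a + s *s phi a = 0"
          hence "r *s a + s *s phi a = 0 + 0" by simp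
          hence "r *s a = 0 \<and> s *s phi a = 0"
            using AB_unique[of "r *s a" 0 "s *s phi a" 0] a subsp_sm[OF A] subsp_0[OF A] subsp_0[OF B] phiBs
            by blast
          thus "r = 0 \<and> s = 0" using a(2) pnz by simp
        qed
        show "?L = {r *s a + s *s phi a | r s. True}" by (rule span_pair)
      qed
      hence isL: "is_line sm ?L" .
      have sL: "subsp ?L" by (rule subsp_span)
      have mA: "meets sm ?L A" using meets_I[OF sL A a(2)] a(1) span_base by blast
      have mB: "meets sm ?L B" using meets_I[OF sL B pnz] phiB[OF a(1)] span_base by blast
      have "a + 1 *s phi a \<in> ?L" using span_add span_sm span_base by (metis insertCI)
      hence mC: "meets sm ?L (Xl 1)"
        using meets_I[OF sL Xl_subsp[OF cent_1] Xl_nz[OF a]] Xl_mem[OF a(1)] by blast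
      have "meets sm ?L X" using R2'[OF isL AS BS CS _ XS] ne mA mB mC by blast
      then obtain p where p: "p \<noteq> 0" "p \<in> ?L" "p \<in> X" using meets_E by blast
      obtain r s where rs: "p = r *s a + s *s phi a" using p(2) span_pair by blast
      have r0: "r \<noteq> 0"
      proof
        assume "r = 0"
        hence "p \<in> B" using rs phiBs a by simp
        thus False using distant_Int[OF XB p(3)] p(1) by blast
      qed
      have "inverse r *s p = a + (inverse r * s) *s phi a"
        using rs r0 by (simp add: sm_add_right sm_assoc[symmetric])
      also have "\<dots> = a + phi ((inverse r * s) *s a)" by (simp add: phi_sm)
      finally have "a + phi ((inverse r * s) *s a) \<in> X" using subsp_sm[OF Xs p(3)] by metis
      thus ?thesis by blast
    qed
    have uniq: "c1 = c2" if u: "a \<in> A" "c1 \<in> A" "c2 \<in> A" "a + phi c1 \<in> X" "a + phi c2 \<in> X" for a c1 c2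
    proof -
      have "(a + phi c1) - (a + phi c2) \<in> X" using u subsp_diff[OF Xs] by blast
      hence "phi (c1 - c2) \<in> X" by (simp add: phi_diff)
      moreover have "phi (c1 - c2) \<in> B" using u subsp_diff[OF A] phiB by blast
      ultimately have "phi (c1 - c2) = 0" using distant_Int[OF XB] by blast
      hence "c1 - c2 = 0" using phi_zero u subsp_diff[OF A] by blast
      thus ?thesis by simp
    qed
    have pair: "k = k'" if pr: "a \<in> A" "a \<noteq> 0" "a' \<in> A" "a' \<notin> span {a}"
      "a + phi (k *s a) \<in> X" "a' + phi (k' *s a') \<in> X" for a a' k k'
    proof -
      have aa: "a + a' \<in> A" using pr subsp_add[OF A] by blast
      have "a + a' \<noteq> 0"
      proof
        assume "a + a' = 0"
        hence "a' = (-1) *s a" by (simp add: add_eq_0_iff)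
        thus False using pr(4) span_singleton by blast
      qed
      then obtain k'' where k'': "(a + a') + phi (k'' *s (a + a')) \<in> X" using step1[OF aa] by blast
      have "(a + phi (k *s a)) + (a' + phi (k' *s a')) \<in> X" using pr subsp_add[OF Xs] by blast
      hence "(a + a') + phi (k *s a + k' *s a') \<in> X" by (simp add: phi_add algebra_simps)
      moreover have "k'' *s (a + a') \<in> A" "k *s a + k' *s a' \<in> A"
        using pr aa subsp_sm[OF A] subsp_add[OF A] by blast+
      ultimately have "k'' *s (a + a') = k *s a + k' *s a'" using uniq[OF aa] k'' by blast
      hence H: "k'' *s a + k'' *s a' = k *s a + k' *s a'" by (simp add: sm_add_right)
      have H2: "(k'' - k) *s a = (k' - k'') *s a'"
        using ag1[OF H] by (simp add: sm_diff_left)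
      have "k' = k''"
      proof (rule ccontr)
        assume ne': "k' \<noteq> k''"
        hence nz: "k' - k'' \<noteq> 0" by simp
        have "a' = inverse (k' - k'') *s ((k'' - k) *s a)" using H2 sm_inv[OF nz] by metis
        hence "a' = (inverse (k' - k'') * (k'' - k)) *s a" by (simp add: sm_assoc)
        thus False using pr(4) span_singleton by blast
      qed
      hence "(k'' - k) *s a = 0" using H2 by simp
      hence "k'' = k" using pr(2) by simp
      thus ?thesis using \<open>k' = k''\<close> by simp
    qed
    obtain a0 where a0: "a0 \<in> A" "a0 \<notin> span {0}" using dimA[OF dim, of 0] by blast
    have a0nz: "a0 \<noteq> 0" using a0 span_0 by blast
    obtain k0 where k0: "a0 + phi (k0 *s a0) \<in> X" using step1[OF a0(1) a0nz] by blast
    have all: "a + phi (k0 *s a) \<in> X" if aA: "a \<in> A" for a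
    proof (cases "a = 0")
      case True thus ?thesis using subsp_0[OF Xs] phi_0 by simp
    next
      case anz: False
      obtain ka where ka: "a + phi (ka *s a) \<in> X" using step1[OF aA anz] by blast
      show ?thesis
      proof (cases "a \<in> span {a0}")
        case False
        have "k0 = ka" using pair[OF a0(1) a0nz aA False k0 ka] .
        thus ?thesis using ka by simp
      next
        case True
        obtain a1 where a1: "a1 \<in> A" "a1 \<notin> span {a0}" using dimA[OF dim, of a0] by blast
        have a1nz: "a1 \<noteq> 0" using a1 span_0 by blast
        obtain k1 where k1: "a1 + phi (k1 *s a1) \<in> X" using step1[OF a1(1) a1nz] by blast
        have "k0 = k1" using pair[OF a0(1) a0nz a1 k0 k1] .
        have "a \<notin> span {a1}"
        proof
          assume "a \<in> span {a1}"
          then obtain nu where nu: "a = nu *s a1" using span_singleton by blast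
          obtain mu where mu: "a = mu *s a0" using True span_singleton by blast
          have "nu \<noteq> 0" using nu anz by auto
          hence "a1 = inverse nu *s a" using nu sm_inv by metis
          hence "a1 = (inverse nu * mu) *s a0" using mu by (simp add: sm_assoc)
          thus False using a1(2) span_singleton by blast
        qed
        hence "k1 = ka" using pair[OF a1(1) a1nz aA _ k1 ka] by blast
        thus ?thesis using ka \<open>k0 = k1\<close> by simp
      qed
    qed
    have ck: "cent k0"
      unfolding cent_def
    proof
      fix mu
      have "mu *s a0 \<in> A" using a0 subsp_sm[OF A] by blast
      hence 1: "mu *s a0 + phi (k0 *s (mu *s a0)) \<in> X" using all by blast
      have "mu *s (a0 + phi (k0 *s a0)) \<in> X" using k0 subsp_sm[OF Xs] by blast
      hence 2: "mu *s a0 + phi (mu *s (k0 *s a0)) \<in> X" by (simp add: sm_add_right phi_sm)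
      have "k0 *s (mu *s a0) = mu *s (k0 *s a0)"
        using uniq[OF \<open>mu *s a0 \<in> A\<close> _ _ 1 2] a0(1) subsp_sm[OF A] by blast
      hence "(k0 * mu) *s a0 = (mu * k0) *s a0" by (simp add: sm_assoc)
      thus "mu * k0 = k0 * mu" using sm_cancel_left[OF a0nz] by simp
    qed
    have "X = Xl k0"
    proof
      show "Xl k0 \<subseteq> X"
      proof
        fix x assume "x \<in> Xl k0"
        then obtain a where a: "a \<in> A" "x = a + k0 *s phi a" by (metis Xl_E)
        thus "x \<in> X" using all[OF a(1)] by (simp add: phi_sm)
      qed
      show "X \<subseteq> Xl k0"
      proof
        fix x assume xX: "x \<in> X"
        let ?a = "pA x"
        have pa: "?a \<in> A" "x - ?a \<in> B" using pA by blast+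
        obtain c where c: "c \<in> A" "x - ?a = phi c" using pa(2) phiA by blast
        have "?a + phi c \<in> X" using xX c by (metis add.commute diff_add_cancel)
        hence "c = k0 *s ?a" using uniq[OF pa(1) c(1) _ _ all[OF pa(1)]] pa subsp_sm[OF A] by blast
        hence "x = ?a + k0 *s phi ?a" using c by (metis diff_add_cancel add.commute phi_sm)
        thus "x \<in> Xl k0" using Xl_mem[OF pa(1)] by metis
      qed
    qed
    thus ?thesis using Rstd_Xl[OF ck] by simp
  qed
qed

lemma Rstd_G: "B \<in> Gr sm \<Longrightarrow> Rstd \<subseteq> Gr sm"
  unfolding Rstd_def using Xl_G by blast

lemma R1_Rstd:
  assumes ne: "A \<noteq> B" "A \<noteq> Xl 1" "B \<noteq> Xl 1"
  shows "R1 sm Rstd"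
  unfolding R1_def
proof (intro conjI)
  show "\<forall>X\<in>Rstd. \<forall>Y\<in>Rstd. X \<noteq> Y \<longrightarrow> distant X Y"
  proof (intro ballI impI)
    fix X Y assume XY: "X \<in> Rstd" "Y \<in> Rstd" "X \<noteq> Y"
    show "distant X Y"
    proof (cases "X = B")
      case True
      then obtain l where "cent l" "Y = Xl l" using Rstd_cases[OF XY(2)] XY by blast
      thus ?thesis using True B_Xl_distant by simp
    next
      case False
      then obtain l where l: "cent l" "X = Xl l" using Rstd_cases[OF XY(1)] by blast
      show ?thesis
      proof (cases "Y = B")
        case True thus ?thesis using l distant_sym[OF B_Xl_distant] by simp
      next
        case False
        then obtain m where m: "cent m" "Y = Xl m" using Rstd_cases[OF XY(2)] by blast
        have "l \<noteq> m" using l m XY by blast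
        thus ?thesis using Xl_distant l m by simp
      qed
    qed
  qed
  have "A \<in> Rstd" "B \<in> Rstd" "Xl 1 \<in> Rstd" using Rstd_A Rstd_B Rstd_Xl[OF cent_1] by blast+
  thus "\<exists>X Y Z. X \<in> Rstd \<and> Y \<in> Rstd \<and> Z \<in> Rstd \<and> X \<noteq> Y \<and> X \<noteq> Z \<and> Y \<noteq> Z"
    using ne by blast
qed

lemma Rstd_reg:
  assumes dim: "dim_gt_2 sm" and BG: "B \<in> Gr sm" and ne: "A \<noteq> B" "A \<noteq> Xl 1" "B \<noteq> Xl 1"
  shows "Z_regulus sm Rstd"
proof -
  have "\<not> (\<exists>S. Rstd \<subset> S \<and> S \<subseteq> Gr sm \<and> R1 sm S \<and> R2 sm S)"
  proof
    assume "\<exists>S. Rstd \<subset> S \<and> S \<subseteq> Gr sm \<and> R1 sm S \<and> R2 sm S"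
    then obtain S where S: "Rstd \<subset> S" "S \<subseteq> Gr sm" "R1 sm S" "R2 sm S" by (elim exE conjE)
    have SG: "\<forall>X\<in>S. subsp X" using S(2) G_subsp by blast
    have D: "\<forall>X\<in>S. \<forall>Y\<in>S. X \<noteq> Y \<longrightarrow> distant X Y" using S(3) unfolding R1_def by blast
    have "A \<in> S" "B \<in> S" "Xl 1 \<in> S" using S(1) Rstd_A Rstd_B Rstd_Xl[OF cent_1] by blast+
    hence "S \<subseteq> Rstd" using contain[OF dim SG D S(4) _ _ _ ne] by blast
    thus False using S(1) by blast
  qed
  thus ?thesis unfolding Z_regulus_def using Rstd_G[OF BG] R1_Rstd[OF ne] R2_Rstd by blast
qed

lemma Rstd_unique:
  assumes dim: "dim_gt_2 sm" and BG: "B \<in> Gr sm" and ne: "A \<noteq> B" "A \<noteq> Xl 1" "B \<noteq> Xl 1"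
    and Z: "Z_regulus sm R" and R: "A \<in> R" "B \<in> R" "Xl 1 \<in> R"
  shows "R = Rstd"
proof -
  have RG: "R \<subseteq> Gr sm" and R1: "R1 sm R" and R2: "R2 sm R"
    and max: "\<not> (\<exists>S. R \<subset> S \<and> S \<subseteq> Gr sm \<and> R1 sm S \<and> R2 sm S)"
    using Z unfolding Z_regulus_def by simp_all
  have SG: "\<forall>X\<in>R. subsp X" using RG G_subsp by blast
  have D: "\<forall>X\<in>R. \<forall>Y\<in>R. X \<noteq> Y \<longrightarrow> distant X Y" using R1 unfolding R1_def by blast
  have sub: "R \<subseteq> Rstd" using contain[OF dim SG D R2 R ne] .
  show ?thesis
  proof (rule ccontr)
    assume "R \<noteq> Rstd"
    hence "R \<subset> Rstd" using sub by blast
    moreover have "Rstd \<subseteq> Gr sm" "R1 sm Rstd" "R2 sm Rstd" using Rstd_G[OF BG] R1_Rstd[OF ne] R2_Rstd by blast+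
    ultimately have "\<exists>S. R \<subset> S \<and> S \<subseteq> Gr sm \<and> R1 sm S \<and> R2 sm S" by blast
    thus False using max by simp
  qed
qed

end


context triple begin
lemma Xl_1: "Xl 1 = {a + phi a | a. a \<in> A}"
  unfolding Xl_def by simp
end

context LV begin

lemma triple_from:
  assumes A: "subsp A" and B: "subsp B" and C: "subsp C"
    and AB: "distant A B" and AC: "distant A C" and BC: "distant B C"
  shows "\<exists>phi pA. triple sm A B phi pA \<and> C = {a + phi a | a. a \<in> A}"
proof -
  obtain pA where kpA: "klin pA" and pA: "\<forall>v. pA v \<in> A \<and> v - pA v \<in> B"
    using proj_exists[OF AB A B] by blast
  have pAid: "a \<in> A \<Longrightarrow> pA a = a" for a using proj_id[OF AB A B pA] by blast
  have ex: "\<exists>b. b \<in> B \<and> pA v + b \<in> C" for v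
  proof -
    obtain c b' where cb: "c \<in> C" "b' \<in> B" "pA v = c + b'"
      using distant_decomp[OF distant_sym[OF BC], of "pA v"] by blast
    have "pA v + (- b') = c" using cb by simp
    thus ?thesis using cb subsp_neg[OF B] by metis
  qed
  have un: "b1 = b2" if "b1 \<in> B" "pA v + b1 \<in> C" "b2 \<in> B" "pA v + b2 \<in> C" for v b1 b2
  proof -
    have "(pA v + b1) - (pA v + b2) \<in> C" using that subsp_diff[OF C] by blast
    hence "b1 - b2 \<in> C" by simp
    moreover have "b1 - b2 \<in> B" using that subsp_diff[OF B] by blast
    ultimately have "b1 - b2 = 0" using distant_Int[OF BC] by blast
    thus ?thesis by simp
  qed
  define phi where "phi v = (THE b. b \<in> B \<and> pA v + b \<in> C)" for v
  have phi: "phi v \<in> B \<and> pA v + phi v \<in> C" for v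
  proof -
    have "\<exists>!b. b \<in> B \<and> pA v + b \<in> C" using ex[of v] un[of _ v] by blast
    thus ?thesis unfolding phi_def by (rule theI')
  qed
  have phic: "phi v = b" if "b \<in> B" "pA v + b \<in> C" for v b
    using un[of "phi v" v b] phi[of v] that by blast
  have kphi: "klin phi"
  proof (rule klin_I)
    fix v w
    have 1: "phi v + phi w \<in> B" using phi subsp_add[OF B] by blast
    have "(pA v + phi v) + (pA w + phi w) \<in> C" using phi subsp_add[OF C] by blast
    hence 2: "pA (v + w) + (phi v + phi w) \<in> C" using klin_add[OF kpA] by (simp add: algebra_simps)
    show "phi (v + w) = phi v + phi w" using phic[OF 1 2] .
  next
    fix a v
    have 1: "a *s phi v \<in> B" using phi subsp_sm[OF B] by blast
    have "a *s (pA v + phi v) \<in> C" using phi subsp_sm[OF C] by blast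
    hence 2: "pA (a *s v) + a *s phi v \<in> C" using klin_sm[OF kpA] by (simp add: sm_add_right)
    show "phi (a *s v) = a *s phi v" using phic[OF 1 2] .
  qed
  have iphi: "inj_on phi A"
  proof (rule klin_inj_on[OF kphi A])
    fix a assume a: "a \<in> A" "phi a = 0"
    have "pA a + phi a \<in> C" using phi by blast
    hence "a \<in> C" using a pAid by simp
    thus "a = 0" using distant_Int[OF AC a(1)] by blast
  qed
  have phiA: "phi ` A = B"
  proof
    show "phi ` A \<subseteq> B" using phi by blast
    show "B \<subseteq> phi ` A"
    proof
      fix b assume b: "b \<in> B"
      obtain a' c where ac: "a' \<in> A" "c \<in> C" "b = a' + c" using distant_decomp[OF AC] by blast
      have naA: "- a' \<in> A" using ac subsp_neg[OF A] by blast
      have eq: "pA (- a') + b = c" using pAid[OF naA] ac by simp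
      have "pA (- a') + b \<in> C" by (subst eq) (rule ac(2))
      hence "phi (- a') = b" by (rule phic[OF b])
      thus "b \<in> phi ` A" using naA by blast
    qed
  qed
  have T: "triple sm A B phi pA"
    by (unfold_locales) (fact A B AB kphi iphi phiA kpA pA)+
  have "C = {a + phi a | a. a \<in> A}"
  proof
    show "C \<subseteq> {a + phi a | a. a \<in> A}"
    proof
      fix c assume c: "c \<in> C"
      let ?a = "pA c"
      have a: "?a \<in> A" "c - ?a \<in> B" using pA by blast+
      have "pA ?a + (c - ?a) \<in> C" using pAid[OF a(1)] c by simp
      hence "phi ?a = c - ?a" using phic[OF a(2)] by blast
      hence "c = ?a + phi ?a" by simp
      thus "c \<in> {a + phi a | a. a \<in> A}" using a(1) by blast
    qed
    show "{a + phi a | a. a \<in> A} \<subseteq> C"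
    proof
      fix z assume "z \<in> {a + phi a | a. a \<in> A}"
      then obtain a where a: "a \<in> A" "z = a + phi a" by blast
      thus "z \<in> C" using phi[of a] pAid[OF a(1)] by simp
    qed
  qed
  thus ?thesis using T by blast
qed

lemma indep_Un_distant:
  assumes D: "distant X Y" and X: "subsp X" and Y: "subsp Y"
    and S1: "indep S1" "S1 \<subseteq> X" and S2: "indep S2" "S2 \<subseteq> Y"
  shows "indep (S1 \<union> S2)"
  unfolding indep_def
proof
  fix v assume v: "v \<in> S1 \<union> S2"
  have z1: "0 \<notin> S1" using indep_zero[OF S1(1)] .
  have z2: "0 \<notin> S2" using indep_zero[OF S2(1)] .
  have sp1: "span S1 \<subseteq> X" using span_minimal[OF X S1(2)] .
  have sp2: "span S2 \<subseteq> Y" using span_minimal[OF Y S2(2)] .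
  show "v \<notin> span (S1 \<union> S2 - {v})"
  proof
    assume vs: "v \<in> span (S1 \<union> S2 - {v})"
    show False
    proof (cases "v \<in> S1")
      case True
      have "v \<notin> S2" using True S1(2) S2(2) z1 distant_Int[OF D] by blast
      hence "S1 \<union> S2 - {v} = (S1 - {v}) \<union> S2" by blast
      hence "v \<in> {x + y | x y. x \<in> span (S1 - {v}) \<and> y \<in> span S2}"
        using vs span_Un[of "S1 - {v}" S2] by simp
      then obtain x y where xy: "x \<in> span (S1 - {v})" "y \<in> span S2" "v = x + y" by blast
      have xX: "x \<in> X" using xy(1) span_mono[of "S1 - {v}" S1] sp1 by blast
      have vX: "v \<in> X" using True S1(2) by blast
      have yY: "y \<in> Y" using xy(2) sp2 by blast
      have "v + 0 = x + y" using xy by simp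
      hence "v = x \<and> 0 = y" by (rule distant_unique[OF D X Y vX xX subsp_0[OF Y] yY])
      hence "v = x" by blast
      thus False using xy(1) S1(1) True unfolding indep_def by blast
    next
      case False
      hence vS2: "v \<in> S2" using v by blast
      hence "S1 \<union> S2 - {v} = S1 \<union> (S2 - {v})" using False by blast
      hence "v \<in> {x + y | x y. x \<in> span S1 \<and> y \<in> span (S2 - {v})}"
        using vs span_Un[of S1 "S2 - {v}"] by simp
      then obtain x y where xy: "x \<in> span S1" "y \<in> span (S2 - {v})" "v = x + y" by blast
      have yY: "y \<in> Y" using xy(2) span_mono[of "S2 - {v}" S2] sp2 by blast
      have xX: "x \<in> X" using xy(1) sp1 by blast
      have vY: "v \<in> Y" using vS2 S2(2) by blast
      have "0 + v = x + y" using xy by simp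
      hence "0 = x \<and> v = y" by (rule distant_unique[OF D X Y subsp_0[OF X] xX vY yY])
      hence "v = y" by blast
      thus False using xy(2) S2(1) vS2 unfolding indep_def by blast
    qed
  qed
qed

end

context triple begin

lemma basis_V:
  assumes E: "indep E" "span E = A"
  shows "indep (E \<union> phi ` E) \<and> span (E \<union> phi ` E) = UNIV \<and> E \<inter> phi ` E = {}"
proof -
  have EA: "E \<subseteq> A" using span_superset[of E] unfolding E(2) .
  have spB: "span (phi ` E) = B" using klin_image_span[OF kphi, of E] unfolding E(2) phiA by simp
  have "inj_on phi (span E)" unfolding E(2) by (rule iphi)
  hence iE: "indep (phi ` E)" using klin_indep_image[OF kphi _ E(1)] by blast
  have phiEB: "phi ` E \<subseteq> B" using span_superset[of "phi ` E"] unfolding spB .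
  have I: "indep (E \<union> phi ` E)" by (rule indep_Un_distant[OF AB A B E(1) EA iE phiEB])
  have "UNIV \<subseteq> span (E \<union> phi ` E)"
  proof
    fix v
    obtain x y where xy: "x \<in> A" "y \<in> B" "v = x + y" using distant_decomp[OF AB] by blast
    have "x \<in> span E" "y \<in> span (phi ` E)" using xy(1,2) unfolding E(2) spB .
    hence "v \<in> {x + y | x y. x \<in> span E \<and> y \<in> span (phi ` E)}" using xy(3) by blast
    thus "v \<in> span (E \<union> phi ` E)" using span_Un[of E "phi ` E"] by simp
  qed
  hence S: "span (E \<union> phi ` E) = UNIV" by blast
  have D: "E \<inter> phi ` E = {}"
  proof (rule equals0I)
    fix x assume x: "x \<in> E \<inter> phi ` E"
    have xE: "x \<in> E" using IntD1[OF x] .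
    have xA: "x \<in> A" using subsetD[OF EA xE] .
    have xB: "x \<in> B" using subsetD[OF phiEB IntD2[OF x]] .
    have "x = 0" using AB_Int[OF xA xB] .
    thus False using indep_zero[OF E(1)] xE by simp
  qed
  show ?thesis by (intro conjI I S D)
qed

end



lemma Un_inf_ordIso:
  assumes inf: "infinite S" and le: "|T| \<le>o |S|"
  shows "|S \<union> T| =o |S|"
proof -
  have "|S \<union> T| \<le>o |S|"
    using card_of_Un_ordLeq_infinite_Field[of "|S|" S T] inf le
    by (simp add: Field_card_of card_of_Card_order ordLeq_refl card_of_card_order_on)
  moreover have "|S| \<le>o |S \<union> T|" by (rule card_of_mono1) blast
  ultimately show ?thesis using ordIso_iff_ordLeq by blast
qed

lemma card_double:
  assumes g: "bij_betw g (S0 \<union> T0) (S \<union> T)" and d0: "S0 \<inter> T0 = {}" and d: "S \<inter> T = {}"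
    and f0: "bij_betw f0 S0 T0" and f: "bij_betw f S T"
  shows "\<exists>h. bij_betw h S0 S"
proof (cases "finite S0")
  case True
  have fT0: "finite T0" using f0 True bij_betw_finite by blast
  have fU0: "finite (S0 \<union> T0)" using True fT0 by simp
  hence fU: "finite (S \<union> T)" using g bij_betw_finite by blast
  hence fS: "finite S" and fT: "finite T" by simp_all
  have c0: "card (S0 \<union> T0) = card S0 + card T0" using card_Un_disjoint[OF True fT0 d0] .
  have c: "card (S \<union> T) = card S + card T" using card_Un_disjoint[OF fS fT d] .
  have "card T0 = card S0" using bij_betw_same_card[OF f0] by simp
  moreover have "card T = card S" using bij_betw_same_card[OF f] by simp
  moreover have "card (S0 \<union> T0) = card (S \<union> T)" using bij_betw_same_card[OF g] .
  ultimately have "card S0 = card S" using c0 c by simp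
  thus ?thesis using True fS finite_same_card_bij by blast
next
  case False
  have iS: "infinite S"
  proof
    assume "finite S"
    hence "finite T" using f bij_betw_finite by blast
    hence "finite (S \<union> T)" using \<open>finite S\<close> by simp
    hence "finite (S0 \<union> T0)" using g bij_betw_finite by blast
    thus False using False by simp
  qed
  have "|S0| =o |T0|" using f0 card_of_ordIso by blast
  hence "|T0| \<le>o |S0|" using ordIso_iff_ordLeq by blast
  hence 1: "|S0 \<union> T0| =o |S0|" using Un_inf_ordIso[OF False] by blast
  have "|S| =o |T|" using f card_of_ordIso by blast
  hence "|T| \<le>o |S|" using ordIso_iff_ordLeq by blast
  hence 2: "|S \<union> T| =o |S|" using Un_inf_ordIso[OF iS] by blast
  have 3: "|S0 \<union> T0| =o |S \<union> T|" using g card_of_ordIso by blast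
  have "|S0| =o |S0 \<union> T0|" using 1 ordIso_symmetric by blast
  hence "|S0| =o |S \<union> T|" using 3 ordIso_transitive by blast
  hence "|S0| =o |S|" using 2 ordIso_transitive by blast
  thus ?thesis using card_of_ordIso by blast
qed

context LV begin

lemma transit:
  assumes T0: "triple sm A0 B0 phi0 pA0" and T: "triple sm A B phi pA"
  shows "\<exists>F\<in>Aut sm. F ` A0 = A \<and> F ` B0 = B \<and>
           F ` {a + phi0 a | a. a \<in> A0} = {a + phi a | a. a \<in> A}"
proof -
  interpret T0: triple sm A0 B0 phi0 pA0 by (rule T0)
  interpret T: triple sm A B phi pA by (rule T)
  obtain E0 where E0: "indep E0" "span E0 = A0"
    using basis_exists[OF T0.A indep_empty] by blast
  obtain E where E: "indep E" "span E = A"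
    using basis_exists[OF T.A indep_empty] by blast
  have E0A: "E0 \<subseteq> A0" using span_superset[of E0] unfolding E0(2) .
  have EA: "E \<subseteq> A" using span_superset[of E] unfolding E(2) .
  have V0: "indep (E0 \<union> phi0 ` E0)" "span (E0 \<union> phi0 ` E0) = UNIV" "E0 \<inter> phi0 ` E0 = {}"
    using T0.basis_V[OF E0] by blast+
  have V: "indep (E \<union> phi ` E)" "span (E \<union> phi ` E) = UNIV" "E \<inter> phi ` E = {}"
    using T.basis_V[OF E] by blast+
  obtain g where g: "bij_betw g (E0 \<union> phi0 ` E0) (E \<union> phi ` E)"
    using basis_bij[OF V0(1) V(1)] V0(2) V(2) by auto
  have ip0: "inj_on phi0 E0" using inj_on_subset[OF T0.iphi E0A] .
  have ip: "inj_on phi E" using inj_on_subset[OF T.iphi EA] .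
  have f0: "bij_betw phi0 E0 (phi0 ` E0)" using ip0 by (simp add: bij_betw_def)
  have f: "bij_betw phi E (phi ` E)" using ip by (simp add: bij_betw_def)
  obtain h where h: "bij_betw h E0 E" using card_double[OF g V0(3) V(3) f0 f] by blast
  define H where "H x = (if x \<in> E0 then h x else phi (h (inv_into E0 phi0 x)))" for x
  have HE0: "x \<in> E0 \<Longrightarrow> H x = h x" for x unfolding H_def by simp
  have Hphi: "H (phi0 e) = phi (h e)" if e: "e \<in> E0" for e
  proof -
    have "phi0 e \<notin> E0" using V0(3) e by blast
    moreover have "inv_into E0 phi0 (phi0 e) = e" using inv_into_f_f[OF ip0 e] .
    ultimately show ?thesis unfolding H_def by simp
  qed
  have hE: "e \<in> E0 \<Longrightarrow> h e \<in> E" for e using bij_betw_apply[OF h] .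
  have hinj: "e \<in> E0 \<Longrightarrow> e' \<in> E0 \<Longrightarrow> h e = h e' \<Longrightarrow> e = e'" for e e'
    using inj_onD[OF bij_betw_imp_inj_on[OF h]] by blast
  have himg: "h ` E0 = E" using bij_betw_imp_surj_on[OF h] .
  have "H ` E0 = h ` E0" by (rule image_cong) (simp_all add: HE0)
  hence HimE0: "H ` E0 = E" using himg by simp
  have Himphi: "H ` (phi0 ` E0) = phi ` E"
  proof -
    have "H ` (phi0 ` E0) = (\<lambda>e. H (phi0 e)) ` E0" by (simp add: image_image)
    also have "\<dots> = (\<lambda>e. phi (h e)) ` E0" using Hphi by simp
    also have "\<dots> = phi ` (h ` E0)" by (simp add: image_image)
    finally show ?thesis using himg by simp
  qed
  have Him: "H ` (E0 \<union> phi0 ` E0) = E \<union> phi ` E" using HimE0 Himphi by (simp add: image_Un)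
  have Hinj: "inj_on H (E0 \<union> phi0 ` E0)"
  proof (rule inj_onI)
    fix x y assume x: "x \<in> E0 \<union> phi0 ` E0" and y: "y \<in> E0 \<union> phi0 ` E0" and xy: "H x = H y"
    show "x = y"
    proof (cases "x \<in> E0")
      case xE: True
      show ?thesis
      proof (cases "y \<in> E0")
        case True thus ?thesis using xE xy HE0 hinj by metis
      next
        case False
        then obtain e' where e': "e' \<in> E0" "y = phi0 e'" using y by blast
        have eq: "h x = phi (h e')" using xy HE0[OF xE] Hphi[OF e'(1)] e'(2) by simp
        have "h x \<in> E" using hE xE .
        moreover have "h x \<in> phi ` E" unfolding eq using hE[OF e'(1)] by (rule imageI)
        ultimately have "h x \<in> E \<inter> phi ` E" by (rule IntI)
        hence False unfolding V(3) by simp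
        thus ?thesis ..
      qed
    next
      case xnE: False
      then obtain e where e: "e \<in> E0" "x = phi0 e" using x by blast
      show ?thesis
      proof (cases "y \<in> E0")
        case yE: True
        have eq: "h y = phi (h e)" using xy HE0[OF yE] Hphi[OF e(1)] e(2) by simp
        have "h y \<in> E" using hE yE .
        moreover have "h y \<in> phi ` E" unfolding eq using hE[OF e(1)] by (rule imageI)
        ultimately have "h y \<in> E \<inter> phi ` E" by (rule IntI)
        hence False unfolding V(3) by simp
        thus ?thesis ..
      next
        case False
        then obtain e' where e': "e' \<in> E0" "y = phi0 e'" using y by blast
        have "phi (h e) = phi (h e')" using xy Hphi e e' by simp
        moreover have "h e \<in> A" "h e' \<in> A" using hE e(1) e'(1) EA by blast+
        ultimately have "h e = h e'" using T.phi_eq by blast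
        hence "e = e'" using hinj e(1) e'(1) by blast
        thus ?thesis using e e' by simp
      qed
    qed
  qed
  obtain F where kF: "klin F" and FH: "\<forall>e\<in>E0 \<union> phi0 ` E0. F e = H e"
    and iF: "inj_on H (E0 \<union> phi0 ` E0) \<and> indep (H ` (E0 \<union> phi0 ` E0)) \<longrightarrow> inj F"
    and sF: "span (H ` (E0 \<union> phi0 ` E0)) = UNIV \<longrightarrow> surj F"
    using lin_ext[OF V0(1) V0(2), of H] by blast
  have "inj F" using iF Hinj Him V(1) by simp
  moreover have "surj F" using sF Him V(2) by simp
  ultimately have FA: "F \<in> Aut sm" unfolding Aut_def using kF bij_def by blast
  have "F ` E0 = H ` E0" using FH by (intro image_cong) auto
  hence FE0: "F ` E0 = E" using HimE0 by simp
  have FA0: "F ` A0 = A"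
  proof -
    have "F ` A0 = span (F ` E0)" using klin_image_span[OF kF, of E0] E0(2) by simp
    thus ?thesis using FE0 E(2) by simp
  qed
  have comm: "F (phi0 a) = phi (F a)" if a: "a \<in> A0" for a
  proof -
    have k1: "klin (F \<circ> phi0)" using klin_comp[OF kF T0.kphi] .
    have k2: "klin (phi \<circ> F)" using klin_comp[OF T.kphi kF] .
    have "\<forall>e\<in>E0. (F \<circ> phi0) e = (phi \<circ> F) e"
    proof
      fix e assume e: "e \<in> E0"
      have "F (phi0 e) = H (phi0 e)" using FH e by blast
      also have "\<dots> = phi (h e)" using Hphi[OF e] .
      also have "\<dots> = phi (F e)" using FH e HE0[OF e] by simp
      finally show "(F \<circ> phi0) e = (phi \<circ> F) e" by simp
    qed
    hence "(F \<circ> phi0) a = (phi \<circ> F) a" using klin_eq_on_span[OF k1 k2] a E0(2) by blast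
    thus ?thesis by simp
  qed
  have FB0: "F ` B0 = B"
  proof -
    have "F ` B0 = F ` (phi0 ` A0)" using T0.phiA by simp
    also have "\<dots> = (\<lambda>a. F (phi0 a)) ` A0" by (simp add: image_image)
    also have "\<dots> = (\<lambda>a. phi (F a)) ` A0" using comm by simp
    also have "\<dots> = phi ` (F ` A0)" by (simp add: image_image)
    finally show ?thesis using FA0 T.phiA by simp
  qed
  have FC0: "F ` {a + phi0 a | a. a \<in> A0} = {a + phi a | a. a \<in> A}"
  proof
    show "F ` {a + phi0 a | a. a \<in> A0} \<subseteq> {a + phi a | a. a \<in> A}"
    proof
      fix z assume "z \<in> F ` {a + phi0 a | a. a \<in> A0}"
      then obtain a where a: "a \<in> A0" "z = F (a + phi0 a)" by blast
      hence "z = F a + phi (F a)" using klin_add[OF kF] comm by simp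
      moreover have "F a \<in> A" using FA0 a by blast
      ultimately show "z \<in> {a + phi a | a. a \<in> A}" by blast
    qed
    show "{a + phi a | a. a \<in> A} \<subseteq> F ` {a + phi0 a | a. a \<in> A0}"
    proof
      fix z assume "z \<in> {a + phi a | a. a \<in> A}"
      then obtain a' where a': "a' \<in> A" "z = a' + phi a'" by blast
      have "a' \<in> F ` A0" using a'(1) FA0 by simp
      then obtain a where a: "a \<in> A0" "a' = F a" by (rule imageE) auto
      hence "z = F (a + phi0 a)" using a' klin_add[OF kF] comm by simp
      moreover have "a + phi0 a \<in> {a + phi0 a | a. a \<in> A0}" using a by blast
      ultimately show "z \<in> F ` {a + phi0 a | a. a \<in> A0}" by blast
    qed
  qed
  show ?thesis by (rule bexI[of _ F]) (intro conjI FA0 FB0 FC0, rule FA)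
qed

end


context LV begin

lemma distant_self: "distant P P \<Longrightarrow> P = {0}"
  unfolding distant_def by blast

lemma init_triple:
  assumes dim: "dim_gt_2 sm" and G: "X \<in> Gr sm"
  shows "\<exists>Y C. Y \<in> Gr sm \<and> C \<in> Gr sm \<and> subsp Y \<and> subsp C \<and> distant X Y \<and> distant X C \<and>
           distant Y C \<and> X \<noteq> Y \<and> X \<noteq> C \<and> Y \<noteq> C"
proof -
  have X: "subsp X" using G by (rule G_subsp)
  obtain Y g where Y: "subsp Y" and D: "distant X Y" and kg: "klin g" and ig: "inj_on g X"
    and gX: "g ` X = Y" using G_elim[OF G] by blast
  obtain pX where kpX: "klin pX" and pX: "\<forall>v. pX v \<in> X \<and> v - pX v \<in> Y"
    using proj_exists[OF D X Y] by blast
  have pXid: "x \<in> X \<Longrightarrow> pX x = x" for x using proj_id[OF D X Y pX] by blast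
  have pX0: "y \<in> Y \<Longrightarrow> pX y = 0" for y using proj_zero[OF D X Y pX] by blast
  have gY: "x \<in> X \<Longrightarrow> g x \<in> Y" for x using gX by blast
  have g0: "x \<in> X \<Longrightarrow> g x = 0 \<Longrightarrow> x = 0" for x
    using ig klin_0[OF kg] subsp_0[OF X] by (metis inj_on_eq_iff)
  obtain u v w where P: "\<forall>a b c. a *s u + b *s v + c *s w = 0 \<longrightarrow> a = 0 \<and> b = 0 \<and> c = 0"
    using dim unfolding dim_gt_2_def by blast
  have u0: "u \<noteq> 0"
  proof
    assume "u = 0"
    hence "1 *s u + 0 *s v + 0 *s w = 0" by simp
    thus False using P by fastforce
  qed
  obtain x0 where x0: "x0 \<in> X" "x0 \<noteq> 0"
  proof (rule ccontr)
    assume "\<not> thesis"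
    hence X0: "X \<subseteq> {0}" using that by blast
    obtain x y where xy: "x \<in> X" "y \<in> Y" "u = x + y" using distant_decomp[OF D] by blast
    have "x = 0" using X0 xy by blast
    moreover have "y = 0" using xy(2) gX X0 klin_0[OF kg] by blast
    ultimately show False using xy u0 by simp
  qed
  define k where "k x = x + g x" for x
  have kk: "klin k" unfolding k_def
    by (rule klin_I) (simp_all add: klin_add[OF kg] klin_sm[OF kg] sm_add_right algebra_simps)
  define C where "C = k ` X"
  have C: "subsp C" unfolding C_def using subsp_image[OF kk X] .
  have Cmem: "x \<in> X \<Longrightarrow> x + g x \<in> C" for x unfolding C_def k_def by blast
  have CE: "c \<in> C \<Longrightarrow> \<exists>x. x \<in> X \<and> c = x + g x" for c unfolding C_def k_def by blast
  have XC: "distant X C"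
  proof (rule distant_I[OF _ X C])
    fix z assume z: "z \<in> X" "z \<in> C"
    then obtain x where x: "x \<in> X" "z = x + g x" using CE by blast
    have "g x = z - x" using x by simp
    hence "g x \<in> X" using z x subsp_diff[OF X] by metis
    hence "g x = 0" using distant_Int[OF D] gY[OF x(1)] by blast
    hence "x = 0" using g0 x by blast
    thus "z = 0" using x klin_0[OF kg] by simp
  next
    fix z
    obtain x y where xy: "x \<in> X" "y \<in> Y" "z = x + y" using distant_decomp[OF D] by blast
    obtain x' where x': "x' \<in> X" "y = g x'" using xy gX by blast
    have "z = (x - x') + (x' + g x')" using xy x' by simp
    moreover have "x - x' \<in> X" using xy x' subsp_diff[OF X] by blast
    ultimately show "\<exists>a b. a \<in> X \<and> b \<in> C \<and> z = a + b" using Cmem[OF x'(1)] by blast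
  qed
  have YC: "distant Y C"
  proof (rule distant_I[OF _ Y C])
    fix z assume z: "z \<in> Y" "z \<in> C"
    then obtain x where x: "x \<in> X" "z = x + g x" using CE by blast
    have "x = z - g x" using x by simp
    hence "x \<in> Y" using z x gY subsp_diff[OF Y] by metis
    hence "x = 0" using distant_Int[OF D x(1)] by blast
    thus "z = 0" using x klin_0[OF kg] by simp
  next
    fix z
    obtain x y where xy: "x \<in> X" "y \<in> Y" "z = x + y" using distant_decomp[OF D] by blast
    have "z = (y - g x) + (x + g x)" using xy by simp
    moreover have "y - g x \<in> Y" using xy gY subsp_diff[OF Y] by blast
    ultimately show "\<exists>a b. a \<in> Y \<and> b \<in> C \<and> z = a + b" using Cmem[OF xy(1)] by blast
  qed
  have YG: "Y \<in> Gr sm"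
  proof -
    let ?h = "inv_into X g"
    have hg: "x \<in> X \<Longrightarrow> ?h (g x) = x" for x using inv_into_f_f[OF ig] by blast
    have hY: "y \<in> Y \<Longrightarrow> ?h y \<in> X \<and> g (?h y) = y" for y
      using gX inv_into_into[of y g X] f_inv_into_f[of y g X] by blast
    have lin: "lin_on Y ?h"
      unfolding lin_on_def
    proof (intro conjI ballI allI)
      fix y1 y2 assume y: "y1 \<in> Y" "y2 \<in> Y"
      have "y1 + y2 = g (?h y1 + ?h y2)" using hY y klin_add[OF kg] by simp
      moreover have "?h y1 + ?h y2 \<in> X" using hY y subsp_add[OF X] by blast
      ultimately show "?h (y1 + y2) = ?h y1 + ?h y2" using hg by simp
    next
      fix a y assume y: "y \<in> Y"
      have "a *s y = g (a *s ?h y)" using hY y klin_sm[OF kg] by simp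
      moreover have "a *s ?h y \<in> X" using hY y subsp_sm[OF X] by blast
      ultimately show "?h (a *s y) = a *s ?h y" using hg by simp
    qed
    have "inj_on ?h Y" using inj_on_inv_into[of Y g X] gX by simp
    moreover have "?h ` Y = X"
    proof
      show "?h ` Y \<subseteq> X" using hY by blast
      show "X \<subseteq> ?h ` Y"
      proof
        fix x assume "x \<in> X"
        hence "?h (g x) = x" "g x \<in> Y" using hg gY by blast+
        thus "x \<in> ?h ` Y" by (metis imageI)
      qed
    qed
    ultimately show ?thesis using G_intro[OF Y X distant_sym[OF D] lin] by blast
  qed
  have CG: "C \<in> Gr sm"
  proof -
    have lin: "lin_on C pX" by (rule klin_lin_on[OF kpX])
    have pc: "x \<in> X \<Longrightarrow> pX (x + g x) = x" for x
      using klin_add[OF kpX] pXid pX0 gY by simp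
    have "inj_on pX C"
    proof (rule inj_onI)
      fix c1 c2 assume c: "c1 \<in> C" "c2 \<in> C" "pX c1 = pX c2"
      obtain x1 where x1: "x1 \<in> X" "c1 = x1 + g x1" using CE c(1) by blast
      obtain x2 where x2: "x2 \<in> X" "c2 = x2 + g x2" using CE c(2) by blast
      have "x1 = x2" using c(3) x1 x2 pc by simp
      thus "c1 = c2" using x1 x2 by simp
    qed
    moreover have "pX ` C = X"
    proof
      show "pX ` C \<subseteq> X" using pX by blast
      show "X \<subseteq> pX ` C"
      proof
        fix x assume x: "x \<in> X"
        hence "pX (x + g x) = x" using pc by blast
        thus "x \<in> pX ` C" using Cmem[OF x] by (metis imageI)
      qed
    qed
    ultimately show ?thesis using G_intro[OF C X distant_sym[OF XC] lin] by blast
  qed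
  have nX: "X \<noteq> {0}" using x0 by blast
  have nY: "Y \<noteq> {0}"
  proof
    assume "Y = {0}"
    hence "g x0 = 0" using gY[OF x0(1)] by blast
    thus False using g0 x0 by blast
  qed
  have nC: "C \<noteq> {0}"
  proof
    assume "C = {0}"
    hence "x0 + g x0 = 0" using Cmem[OF x0(1)] by blast
    hence eq: "x0 = - g x0" by (simp add: eq_neg_iff_add_eq_0)
    have "x0 \<in> Y" by (subst eq) (rule subsp_neg[OF Y gY[OF x0(1)]])
    thus False using distant_Int[OF D x0(1)] x0(2) by blast
  qed
  have "X \<noteq> Y" using distant_self D nX by metis
  moreover have "X \<noteq> C" using distant_self XC nX by metis
  moreover have "Y \<noteq> C" using distant_self YC nY by metis
  ultimately show ?thesis using YG CG Y C D XC YC by blast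
qed

lemma part2:
  assumes dim: "dim_gt_2 sm" and G: "A \<in> Gr sm" "B \<in> Gr sm" "C \<in> Gr sm"
    and ne: "A \<noteq> B" "A \<noteq> C" "B \<noteq> C" and d: "distant A B" "distant A C" "distant B C"
  shows "\<exists>!R. Z_regulus sm R \<and> A \<in> R \<and> B \<in> R \<and> C \<in> R"
proof -
  obtain phi pA where T: "triple sm A B phi pA" and Cd: "C = {a + phi a | a. a \<in> A}"
    using triple_from[OF G_subsp[OF G(1)] G_subsp[OF G(2)] G_subsp[OF G(3)] d] by blast
  interpret T: triple sm A B phi pA by (rule T)
  have C1: "C = T.Xl 1" using Cd T.Xl_1 by simp
  have ne': "A \<noteq> B" "A \<noteq> T.Xl 1" "B \<noteq> T.Xl 1" using ne C1 by simp_all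
  show ?thesis
  proof (rule ex1I[of _ T.Rstd])
    show "Z_regulus sm T.Rstd \<and> A \<in> T.Rstd \<and> B \<in> T.Rstd \<and> C \<in> T.Rstd"
      using T.Rstd_reg[OF dim G(2) ne'] T.Rstd_A T.Rstd_B T.Rstd_Xl[OF T.cent_1] C1 by simp
  next
    fix R assume "Z_regulus sm R \<and> A \<in> R \<and> B \<in> R \<and> C \<in> R"
    thus "R = T.Rstd" using T.Rstd_unique[OF dim G(2) ne'] C1 by blast
  qed
qed

end

theorem corollary4p6:
  fixes sm :: "'k::division_ring \<Rightarrow> 'v::ab_group_add \<Rightarrow> 'v"
  assumes "left_vs sm" and "dim_gt_2 sm" and "Gr sm \<noteq> {}"
  shows "(\<exists>R0. {R. Z_regulus sm R} = {(\<lambda>X. f ` X) ` R0 | f. f \<in> Aut sm}) \<and>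
         (\<forall>A\<in>Gr sm. \<forall>B\<in>Gr sm. \<forall>C\<in>Gr sm.
            A \<noteq> B \<and> A \<noteq> C \<and> B \<noteq> C \<and> distant A B \<and> distant A C \<and> distant B C \<longrightarrow>
            (\<exists>!R. Z_regulus sm R \<and> A \<in> R \<and> B \<in> R \<and> C \<in> R))"
proof -
  interpret L: LV sm by (rule LV.intro) (rule assms(1))
  have dim: "dim_gt_2 sm" by (rule assms(2))
  have P2: "\<forall>A\<in>Gr sm. \<forall>B\<in>Gr sm. \<forall>C\<in>Gr sm.
            A \<noteq> B \<and> A \<noteq> C \<and> B \<noteq> C \<and> distant A B \<and> distant A C \<and> distant B C \<longrightarrow>
            (\<exists>!R. Z_regulus sm R \<and> A \<in> R \<and> B \<in> R \<and> C \<in> R)"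
    using L.part2[OF dim] by blast
  obtain X0 where X0: "X0 \<in> Gr sm" using assms(3) by blast
  obtain Y0 C0 where Y0: "Y0 \<in> Gr sm" and C0: "C0 \<in> Gr sm" and sY0: "subspace sm Y0"
    and sC0: "subspace sm C0" and d1: "distant X0 Y0" and d2: "distant X0 C0" and d3: "distant Y0 C0"
    and n1: "X0 \<noteq> Y0" and n2: "X0 \<noteq> C0" and n3: "Y0 \<noteq> C0"
    using L.init_triple[OF dim X0] by blast
  obtain phi0 pA0 where T0: "triple sm X0 Y0 phi0 pA0" and C0d: "C0 = {a + phi0 a | a. a \<in> X0}"
    using L.triple_from[OF L.G_subsp[OF X0] sY0 sC0 d1 d2 d3] by blast
  interpret T0: triple sm X0 Y0 phi0 pA0 by (rule T0)
  have C01: "C0 = T0.Xl 1" using C0d T0.Xl_1 by simp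
  have ne0: "X0 \<noteq> Y0" "X0 \<noteq> T0.Xl 1" "Y0 \<noteq> T0.Xl 1" using n1 n2 n3 C01 by simp_all
  define R0 where "R0 = T0.Rstd"
  have R0reg: "Z_regulus sm R0" unfolding R0_def using T0.Rstd_reg[OF dim Y0 ne0] .
  have R0mem: "X0 \<in> R0" "Y0 \<in> R0" "C0 \<in> R0"
    unfolding R0_def using T0.Rstd_A T0.Rstd_B T0.Rstd_Xl[OF T0.cent_1] C01 by simp_all
  have "{R. Z_regulus sm R} = {(\<lambda>X. f ` X) ` R0 | f. f \<in> Aut sm}"
  proof
    show "{(\<lambda>X. f ` X) ` R0 | f. f \<in> Aut sm} \<subseteq> {R. Z_regulus sm R}"
      using L.Zreg_im[OF _ R0reg] by blast
    show "{R. Z_regulus sm R} \<subseteq> {(\<lambda>X. f ` X) ` R0 | f. f \<in> Aut sm}"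
    proof
      fix R assume "R \<in> {R. Z_regulus sm R}"
      hence Z: "Z_regulus sm R" by simp
      hence RG: "R \<subseteq> Gr sm" and R1: "R1 sm R" unfolding Z_regulus_def by simp_all
      obtain A B C where abc: "A \<in> R" "B \<in> R" "C \<in> R" "A \<noteq> B" "A \<noteq> C" "B \<noteq> C"
        using R1 unfolding R1_def by blast
      have dd: "distant A B" "distant A C" "distant B C" using R1 abc unfolding R1_def by blast+
      have G: "A \<in> Gr sm" "B \<in> Gr sm" "C \<in> Gr sm" using RG abc by blast+
      obtain phi pA where T: "triple sm A B phi pA" and Cd: "C = {a + phi a | a. a \<in> A}"
        using L.triple_from[OF L.G_subsp[OF G(1)] L.G_subsp[OF G(2)] L.G_subsp[OF G(3)] dd] by blast
      obtain F where F: "F \<in> Aut sm" "F ` X0 = A" "F ` Y0 = B"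
        and FC: "F ` {a + phi0 a | a. a \<in> X0} = {a + phi a | a. a \<in> A}"
        using L.transit[OF T0 T] by blast
      have FC0: "F ` C0 = C" using FC C0d Cd by simp
      let ?R' = "(\<lambda>X. F ` X) ` R0"
      have Z': "Z_regulus sm ?R'" using L.Zreg_im[OF F(1) R0reg] .
      have "A \<in> ?R'" "B \<in> ?R'" "C \<in> ?R'" using R0mem F(2,3) FC0 by (metis imageI)+
      hence "?R' = R"
        using P2 G abc dd Z' Z by (metis (no_types, lifting))
      thus "R \<in> {(\<lambda>X. f ` X) ` R0 | f. f \<in> Aut sm}" using F(1) by blast
    qed
  qed
  thus ?thesis using P2 by blast
qed


end
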